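(* The set of unitary equivalence classes of irreducible atomic P-modules is in bijection with $W\times S_1$, via $(w,\varphi)\mapsto$ the class of $m_{w,\varphi}$.
   Context: A P-module is $(A,B,\mathfrak H)$ with $\mathfrak H$ finite-dimensional complex Hilbert, $A^*A+B^*B=\mathrm{id}$. Sub-module: subspace invariant under $A,B$; irreducible: no sub-modules besides $\{0\}$ and itself; unitary equivalence: a unitary $U$ with $UA=\tilde AU$, $UB=\tilde BU$. $\mathfrak H=\mathfrak H_{\mathrm{comp}}\oplus\mathfrak H_{\mathrm{res}}$, with $\mathfrak H_{\mathrm{comp}}$ a direct sum of irreducible sub-modules and $\mathfrak H_{\mathrm{res}}$ containing no non-zero sub-module. For a ray $p=x_1x_2\cdots$, $p_n=x_1\cdots x_n$ and $p_n\xi:=X_{x_n}\cdots X_{x_1}\xi$ ($X_0=A,X_1=B$); non-zero $\xi$ is contained in $p$ if $\|p_n\xi\|=\|\xi\|$ for all $n$. $\mathfrak H_{\mathrm{atom}}=\mathrm{span}\{\xi\in\mathfrak H_{\mathrm{comp}}:\xi\text{ contained in a periodic ray}\}$; $\mathfrak H$ is atomic if $\mathfrak H_{\mathrm{atom}}=\mathfrak H_{\mathrm{comp}}$. $W_d$: fixed representatives of prime binary words of length $d$ (not a proper power) modulo cyclic permutation; $W=\bigcup_dW_d$; $S_1$ unit circle. For $w\in W_d$: on the standard basis of $\mathbf C^d$, $A_we_n=e_{n+1}$ (and $B_we_n=0$) if the $n$-th digit of $w$ is $0$, $B_we_n=e_{n+1}$ (and $A_we_n=0$) if it is $1$, indices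 mod $d$; $D_\varphi=\mathrm{diag}(1,\dots,1,\varphi)$; $m_{w,\varphi}=(A_wD_\varphi,B_wD_\varphi,\mathbf C^d)$. *)

theory Defs
  imports Complex_Main "Jordan_Normal_Form.Matrix"
begin

text \<open>A P-module on the Hilbert space C^n (standard inner product) is a triple (A, B, n)
  of complex n x n matrices with A^* A + B^* B = id.  Every finite-dimensional complex
  Hilbert space is isometric to some C^n, so this loses no generality.\<close>

type_synonym pmod = "complex mat \<times> complex mat \<times> nat"

definition adj :: "complex mat \<Rightarrow> complex mat" where
  "adj M = mat (dim_col M) (dim_row M) (\<lambda>(i, j). cnj (M $$ (j, i)))"

definition vnorm :: "complex vec \<Rightarrow> real" where
  "vnorm v = sqrt (\<Sum>i<dim_vec v. (cmod (v $ i))\<^sup>2)"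

definition is_pmodule :: "pmod \<Rightarrow> bool" where
  "is_pmodule M = (case M of (A, B, n) \<Rightarrow>
     A \<in> carrier_mat n n \<and> B \<in> carrier_mat n n \<and> adj A * A + adj B * B = 1\<^sub>m n)"

definition is_subspace :: "nat \<Rightarrow> complex vec set \<Rightarrow> bool" where
  "is_subspace n V = (V \<subseteq> carrier_vec n \<and> 0\<^sub>v n \<in> V \<and>
     (\<forall>u\<in>V. \<forall>v\<in>V. u + v \<in> V) \<and> (\<forall>c. \<forall>v\<in>V. c \<cdot>\<^sub>v v \<in> V))"

definition span_in :: "nat \<Rightarrow> complex vec set \<Rightarrow> complex vec set" where
  "span_in n S = \<Inter>{V. is_subspace n V \<and> S \<subseteq> V}"

definition is_submodule :: "pmod \<Rightarrow> complex vec set \<Rightarrow> bool" where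
  "is_submodule M V = (case M of (A, B, n) \<Rightarrow>
     is_subspace n V \<and> (\<forall>v\<in>V. A *\<^sub>v v \<in> V \<and> B *\<^sub>v v \<in> V))"

definition irreducible_pmod :: "pmod \<Rightarrow> bool" where
  "irreducible_pmod M = (case M of (A, B, n) \<Rightarrow>
     is_pmodule M \<and> n > 0 \<and>
     (\<forall>V. is_submodule M V \<longrightarrow> V = {0\<^sub>v n} \<or> V = carrier_vec n))"

definition irreducible_submodule :: "pmod \<Rightarrow> complex vec set \<Rightarrow> bool" where
  "irreducible_submodule M V = (case M of (A, B, n) \<Rightarrow>
     is_submodule M V \<and> V \<noteq> {0\<^sub>v n} \<and>
     (\<forall>U. is_submodule M U \<longrightarrow> U \<subseteq> V \<longrightarrow> U = {0\<^sub>v n} \<or> U = V))"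

definition H_comp :: "pmod \<Rightarrow> complex vec set" where
  "H_comp M = (case M of (A, B, n) \<Rightarrow>
     span_in n (\<Union>{V. irreducible_submodule M V}))"

text \<open>Rays are infinite binary sequences p : nat \<Rightarrow> bool (False = 0, True = 1), with
  x_1 = p 0, x_2 = p 1, ...; path_apply M p k v = X_{x_k} ... X_{x_1} v.\<close>
fun path_apply :: "pmod \<Rightarrow> (nat \<Rightarrow> bool) \<Rightarrow> nat \<Rightarrow> complex vec \<Rightarrow> complex vec" where
  "path_apply M p 0 v = v"
| "path_apply M p (Suc k) v =
     (case M of (A, B, n) \<Rightarrow> (if p k then B else A) *\<^sub>v path_apply M p k v)"

definition contained_in_ray :: "pmod \<Rightarrow> complex vec \<Rightarrow> (nat \<Rightarrow> bool) \<Rightarrow> bool" where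
  "contained_in_ray M v p = (v \<noteq> 0\<^sub>v (dim_vec v) \<and>
     (\<forall>k. vnorm (path_apply M p k v) = vnorm v))"

definition periodic_ray :: "(nat \<Rightarrow> bool) \<Rightarrow> bool" where
  "periodic_ray p = (\<exists>k>0. \<forall>i. p (i + k) = p i)"

definition H_atom :: "pmod \<Rightarrow> complex vec set" where
  "H_atom M = (case M of (A, B, n) \<Rightarrow>
     span_in n {v \<in> H_comp M. \<exists>p. periodic_ray p \<and> contained_in_ray M v p})"

definition atomic_pmod :: "pmod \<Rightarrow> bool" where
  "atomic_pmod M = (H_atom M = H_comp M)"

definition unitary_mat :: "nat \<Rightarrow> complex mat \<Rightarrow> bool" where
  "unitary_mat n U = (U \<in> carrier_mat n n \<and> adj U * U = 1\<^sub>m n \<and> U * adj U = 1\<^sub>m n)"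

definition unit_equiv :: "pmod \<Rightarrow> pmod \<Rightarrow> bool" where
  "unit_equiv M M' = (case M of (A, B, n) \<Rightarrow> case M' of (A', B', n') \<Rightarrow>
     n = n' \<and> (\<exists>U. unitary_mat n U \<and> U * A = A' * U \<and> U * B = B' * U))"

text \<open>Binary words: bool lists (False = digit 0, True = digit 1).\<close>
definition prime_word :: "bool list \<Rightarrow> bool" where
  "prime_word w = (w \<noteq> [] \<and> \<not> (\<exists>u k. k \<ge> 2 \<and> w = concat (replicate k u)))"

definition cyc_equiv :: "bool list \<Rightarrow> bool list \<Rightarrow> bool" where
  "cyc_equiv w w' = (\<exists>i. rotate i w = w')"

definition representatives :: "bool list set \<Rightarrow> bool" where
  "representatives W = ((\<forall>w\<in>W. prime_word w) \<and>
     (\<forall>v. prime_word v \<longrightarrow> (\<exists>!w. w \<in> W \<and> cyc_equiv w v)))"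

definition S1 :: "complex set" where
  "S1 = {z. cmod z = 1}"

text \<open>A_w, B_w on C^d (0-based indices: e_i \<mapsto> e_{(i+1) mod d}) and D_phi.\<close>
definition A_w :: "bool list \<Rightarrow> complex mat" where
  "A_w w = (let d = length w in
     mat d d (\<lambda>(j, i). if j = Suc i mod d \<and> \<not> w ! i then 1 else 0))"

definition B_w :: "bool list \<Rightarrow> complex mat" where
  "B_w w = (let d = length w in
     mat d d (\<lambda>(j, i). if j = Suc i mod d \<and> w ! i then 1 else 0))"

definition D_phi :: "nat \<Rightarrow> complex \<Rightarrow> complex mat" where
  "D_phi d \<phi> = mat d d (\<lambda>(j, i). if j = i then (if i = d - 1 then \<phi> else 1) else 0)"

definition m_wphi :: "bool list \<Rightarrow> complex \<Rightarrow> pmod" where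
  "m_wphi w \<phi> = (A_w w * D_phi (length w) \<phi>, B_w w * D_phi (length w) \<phi>, length w)"

definition irr_atomic :: "pmod \<Rightarrow> bool" where
  "irr_atomic M = (is_pmodule M \<and> irreducible_pmod M \<and> atomic_pmod M)"

definition ue_rel :: "(pmod \<times> pmod) set" where
  "ue_rel = {(M, M'). irr_atomic M \<and> irr_atomic M' \<and> unit_equiv M M'}"

end

theory Submission
  imports Defs "Jordan_Normal_Form.Spectral_Radius"
begin

definition ip :: "complex vec \<Rightarrow> complex vec \<Rightarrow> complex" where
  "ip u v = (\<Sum>i<dim_vec u. u $ i * cnj (v $ i))"

definition nsq :: "complex vec \<Rightarrow> real" where
  "nsq v = (\<Sum>i<dim_vec v. (cmod (v $ i))\<^sup>2)"

lemma vnorm_nsq: "vnorm v = sqrt (nsq v)"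
  unfolding vnorm_def nsq_def by simp

lemma nsq_nonneg: "nsq v \<ge> 0"
  unfolding nsq_def by (intro sum_nonneg) auto

lemma ip_self: "ip v v = of_real (nsq v)"
  unfolding ip_def nsq_def of_real_sum
  by (intro sum.cong refl) (rule complex_norm_square[symmetric])

lemma nsq_zero_iff: assumes "v \<in> carrier_vec n" shows "nsq v = 0 \<longleftrightarrow> v = 0\<^sub>v n"
proof
  assume "nsq v = 0"
  hence "\<forall>i\<in>{..<dim_vec v}. (cmod (v $ i))\<^sup>2 = 0"
    unfolding nsq_def by (subst sum_nonneg_eq_0_iff[symmetric]) auto
  thus "v = 0\<^sub>v n" using assms by (intro eq_vecI) auto
next
  assume "v = 0\<^sub>v n" thus "nsq v = 0" unfolding nsq_def by simp
qed

lemma vnorm_eq_iff: "vnorm u = vnorm v \<longleftrightarrow> nsq u = nsq v"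
  unfolding vnorm_nsq using nsq_nonneg[of u] nsq_nonneg[of v] by simp

lemma ip_adj: assumes A: "A \<in> carrier_mat nr nc" and u: "u \<in> carrier_vec nc" and v: "v \<in> carrier_vec nr"
  shows "ip (A *\<^sub>v u) v = ip u (adj A *\<^sub>v v)"
proof -
  have "ip (A *\<^sub>v u) v = (\<Sum>i<nr. (\<Sum>k<nc. A $$ (i,k) * u $ k) * cnj (v $ i))"
    unfolding ip_def using A u by (simp add: scalar_prod_def row_def atLeast0LessThan)
  also have "\<dots> = (\<Sum>i<nr. \<Sum>k<nc. A $$ (i,k) * u $ k * cnj (v $ i))"
    by (simp add: sum_distrib_right)
  also have "\<dots> = (\<Sum>k<nc. \<Sum>i<nr. A $$ (i,k) * u $ k * cnj (v $ i))"
    by (rule sum.swap)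
  also have "\<dots> = (\<Sum>k<nc. u $ k * cnj (\<Sum>i<nr. cnj (A $$ (i,k)) * v $ i))"
    by (simp add: sum_distrib_left mult_ac)
  also have "\<dots> = ip u (adj A *\<^sub>v v)"
    unfolding ip_def adj_def using A u v by (simp add: scalar_prod_def row_def atLeast0LessThan)
  finally show ?thesis .
qed

lemma ip_add_right: assumes "u \<in> carrier_vec n" "v \<in> carrier_vec n" "w \<in> carrier_vec n"
  shows "ip u (v + w) = ip u v + ip u w"
  unfolding ip_def using assms by (simp add: sum.distrib algebra_simps)

lemma ip_pmod: assumes "is_pmodule (A, B, n)" and u: "u \<in> carrier_vec n" and v: "v \<in> carrier_vec n"
  shows "ip (A *\<^sub>v u) (A *\<^sub>v v) + ip (B *\<^sub>v u) (B *\<^sub>v v) = ip u v"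
proof -
  from assms have A: "A \<in> carrier_mat n n" and B: "B \<in> carrier_mat n n"
    and e: "adj A * A + adj B * B = 1\<^sub>m n" unfolding is_pmodule_def by auto
  have aA: "adj A \<in> carrier_mat n n" "adj B \<in> carrier_mat n n" using A B unfolding adj_def by auto
  have "ip (A *\<^sub>v u) (A *\<^sub>v v) + ip (B *\<^sub>v u) (B *\<^sub>v v)
     = ip u (adj A *\<^sub>v (A *\<^sub>v v)) + ip u (adj B *\<^sub>v (B *\<^sub>v v))"
    using ip_adj[OF A u] ip_adj[OF B u] A B v by simp
  also have "\<dots> = ip u (adj A *\<^sub>v (A *\<^sub>v v) + adj B *\<^sub>v (B *\<^sub>v v))"
    using aA A B u v by (simp add: ip_add_right[of u n])
  also have "adj A *\<^sub>v (A *\<^sub>v v) + adj B *\<^sub>v (B *\<^sub>v v) = (adj A * A + adj B * B) *\<^sub>v v"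
  proof -
    have "(adj A * A + adj B * B) *\<^sub>v v = (adj A * A) *\<^sub>v v + (adj B * B) *\<^sub>v v"
      by (rule add_mult_distrib_mat_vec[of _ n n]) (use aA A B v in auto)
    thus ?thesis using aA A B v by simp
  qed
  also have "\<dots> = v" using e v by simp
  finally show ?thesis .
qed

lemma nsq_pmod: assumes "is_pmodule (A, B, n)" and u: "u \<in> carrier_vec n"
  shows "nsq (A *\<^sub>v u) + nsq (B *\<^sub>v u) = nsq u"
  using ip_pmod[OF assms u] unfolding ip_self by (metis of_real_add of_real_eq_iff)

lemma nsq_smult: "nsq (a \<cdot>\<^sub>v v) = (cmod a)\<^sup>2 * nsq v"
  unfolding nsq_def by (simp add: norm_mult power_mult_distrib sum_distrib_left)

lemma smult_mat_mult_vec: fixes A :: "complex mat" assumes "A \<in> carrier_mat nr nc" "v \<in> carrier_vec nc"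
  shows "(k \<cdot>\<^sub>m A) *\<^sub>v v = k \<cdot>\<^sub>v (A *\<^sub>v v)"
proof -
  have "dim_col A = nc" "dim_vec v = nc" using assms by auto
  thus ?thesis by (intro eq_vecI) (use assms in \<open>auto simp: scalar_prod_smult_left\<close>)
qed

lemma smult_pow_mat: fixes S :: "complex mat" assumes S: "S \<in> carrier_mat n n"
  shows "(k \<cdot>\<^sub>m S) ^\<^sub>m m = (k ^ m) \<cdot>\<^sub>m (S ^\<^sub>m m)"
proof (induction m)
  case 0 thus ?case using S by (intro eq_matI) auto
next
  case (Suc m)
  have "(k \<cdot>\<^sub>m S) ^\<^sub>m Suc m = ((k ^ m) \<cdot>\<^sub>m (S ^\<^sub>m m)) * (k \<cdot>\<^sub>m S)" using Suc by simp
  also have "\<dots> = (k ^ Suc m) \<cdot>\<^sub>m (S ^\<^sub>m Suc m)"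
  proof -
    have "S ^\<^sub>m m \<in> carrier_mat n n" using S by simp
    thus ?thesis by (intro eq_matI) (use S in \<open>auto simp: scalar_prod_smult_left scalar_prod_smult_right mult_ac\<close>)
  qed
  finally show ?case .
qed

lemma carrier_vec_0_eq: "v \<in> carrier_vec 0 \<Longrightarrow> v = 0\<^sub>v 0"
  by (rule eq_vecI) auto

lemma entry_bound:
  assumes M: "M \<in> carrier_mat n n" and v: "v \<in> carrier_vec n" and i: "i < n"
    and b: "\<And>i j. i < n \<Longrightarrow> j < n \<Longrightarrow> cmod (M $$ (i,j)) \<le> b"
  shows "cmod ((M *\<^sub>v v) $ i) \<le> b * (\<Sum>j<n. cmod (v $ j))"
proof -
  have "(M *\<^sub>v v) $ i = (\<Sum>j<n. M $$ (i,j) * v $ j)"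
    using M v i by (simp add: scalar_prod_def row_def atLeast0LessThan)
  hence "cmod ((M *\<^sub>v v) $ i) \<le> (\<Sum>j<n. cmod (M $$ (i,j)) * cmod (v $ j))"
    by (metis (no_types, lifting) norm_mult norm_sum sum.cong)
  also have "\<dots> \<le> (\<Sum>j<n. b * cmod (v $ j))"
    by (intro sum_mono mult_right_mono b i) auto
  finally show ?thesis by (simp add: sum_distrib_left)
qed

lemma eig_unimodular:
  fixes T :: "complex mat"
  assumes T: "T \<in> carrier_mat n n"
    and contr: "\<And>v. v \<in> carrier_vec n \<Longrightarrow> nsq (T *\<^sub>v v) \<le> nsq v"
    and xi: "\<xi> \<in> carrier_vec n" "\<xi> \<noteq> 0\<^sub>v n"
    and pres: "\<And>k. nsq (T ^\<^sub>m k *\<^sub>v \<xi>) = nsq \<xi>"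
  shows "\<exists>\<zeta> l. \<zeta> \<in> carrier_vec n \<and> \<zeta> \<noteq> 0\<^sub>v n \<and> T *\<^sub>v \<zeta> = l \<cdot>\<^sub>v \<zeta> \<and> cmod l = 1"
proof -
  have n: "n > 0" using xi carrier_vec_0_eq by (cases n) auto
  have xpos: "nsq \<xi> > 0" using nsq_zero_iff[OF xi(1)] nsq_nonneg[of \<xi>] xi(2) by auto
  define \<rho> where "\<rho> = spectral_radius T"
  from spectral_radius_mem_max(1)[OF T n] obtain l0 where l0: "l0 \<in> spectrum T" "cmod l0 = \<rho>"
    unfolding \<rho>_def by auto
  show ?thesis
  proof (cases "\<rho> \<ge> 1")
    case True
    from l0 obtain \<zeta> where ev: "eigenvector T \<zeta> l0" unfolding spectrum_def eigenvalue_def by auto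
    hence z: "\<zeta> \<in> carrier_vec n" "\<zeta> \<noteq> 0\<^sub>v n" "T *\<^sub>v \<zeta> = l0 \<cdot>\<^sub>v \<zeta>"
      unfolding eigenvector_def using T by auto
    have zpos: "nsq \<zeta> > 0" using nsq_zero_iff[OF z(1)] nsq_nonneg[of \<zeta>] z(2) by auto
    have "(cmod l0)\<^sup>2 * nsq \<zeta> \<le> 1 * nsq \<zeta>" using contr[OF z(1)] z(3) nsq_smult by simp
    hence "(cmod l0)\<^sup>2 \<le> 1" using zpos by (meson mult_le_cancel_right_pos)
    hence "cmod l0 \<le> 1" by (simp add: power_le_one_iff abs_square_le_1)
    thus ?thesis using True l0 z by (intro exI[of _ \<zeta>] exI[of _ l0]) auto
  next
    case False
    have r0: "\<rho> \<ge> 0" using l0 by auto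
    define c where "c = (\<rho> + 1) / 2"
    have c: "0 < c" "c < 1" "\<rho> < c" using False r0 unfolding c_def by auto
    define S where "S = complex_of_real (1 / c) \<cdot>\<^sub>m T"
    have S: "S \<in> carrier_mat n n" using T unfolding S_def by auto
    have TS: "T = complex_of_real c \<cdot>\<^sub>m S"
      unfolding S_def by (rule eq_matI) (use c T in auto)
    have "spectral_radius S < 1"
    proof -
      from spectral_radius_mem_max(1)[OF S n] obtain \<mu> where mu: "\<mu> \<in> spectrum S"
        "cmod \<mu> = spectral_radius S" by auto
      from mu obtain v where ev: "eigenvector S v \<mu>" unfolding spectrum_def eigenvalue_def by auto
      hence v: "v \<in> carrier_vec n" "v \<noteq> 0\<^sub>v n" "S *\<^sub>v v = \<mu> \<cdot>\<^sub>v v"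
        unfolding eigenvector_def using S by auto
      have "T *\<^sub>v v = (complex_of_real c * \<mu>) \<cdot>\<^sub>v v"
        unfolding TS using smult_mat_mult_vec[OF S v(1)] v(3) by (simp add: smult_smult_assoc)
      hence "eigenvector T v (complex_of_real c * \<mu>)" unfolding eigenvector_def using v T by auto
      hence "cmod (complex_of_real c * \<mu>) \<in> norm ` spectrum T"
        unfolding spectrum_def eigenvalue_def by auto
      from spectral_radius_mem_max(2)[OF T n this] have "c * cmod \<mu> \<le> \<rho>"
        unfolding \<rho>_def using c by (simp add: norm_mult)
      hence "c * cmod \<mu> < c * 1" using c by linarith
      hence "cmod \<mu> < 1" using c by (meson mult_less_cancel_left_pos)
      thus ?thesis using mu by simp
    qed
    from spectral_radius_jnf_norm_bound_less_1_upper_triangular[OF S this]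
    obtain C where C: "\<And>k. norm_bound (S ^\<^sub>m k) C" by auto
    define X where "X = (\<Sum>j<n. cmod (\<xi> $ j))"
    have X: "X \<ge> 0" unfolding X_def by (intro sum_nonneg) auto
    have C0: "C \<ge> 0" using C[of 0] n S unfolding norm_bound_def
      by (metis norm_ge_zero order.trans pow_carrier_mat carrier_matD)
    define Q where "Q = real n * (C * X)\<^sup>2"
    have Q: "Q \<ge> 0" unfolding Q_def by auto
    have bnd: "nsq (T ^\<^sub>m k *\<^sub>v \<xi>) \<le> Q * (c\<^sup>2) ^ k" for k
    proof -
      have Tk: "T ^\<^sub>m k = complex_of_real (c ^ k) \<cdot>\<^sub>m (S ^\<^sub>m k)"
        unfolding TS smult_pow_mat[OF S] by simp
      have Tkc: "T ^\<^sub>m k \<in> carrier_mat n n" using T by simp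
      have e: "cmod ((T ^\<^sub>m k *\<^sub>v \<xi>) $ i) \<le> (c ^ k * C) * X" if i: "i < n" for i
        unfolding X_def
      proof (rule entry_bound[OF Tkc xi(1) i])
        fix i j assume ij: "i < n" "j < n"
        have h1: "cmod ((S ^\<^sub>m k) $$ (i,j)) \<le> C" using C[of k] ij S unfolding norm_bound_def by auto
        have h2: "(T ^\<^sub>m k) $$ (i,j) = complex_of_real (c ^ k) * (S ^\<^sub>m k) $$ (i,j)"
          unfolding Tk using ij S by simp
        have h3: "cmod (complex_of_real (c ^ k)) = c ^ k" using c by (simp only: norm_of_real abs_of_nonneg zero_le_power less_imp_le)
        show "cmod ((T ^\<^sub>m k) $$ (i,j)) \<le> c ^ k * C"
          unfolding h2 norm_mult h3 using h1 c by (simp add: mult_left_mono)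
      qed
      have "nsq (T ^\<^sub>m k *\<^sub>v \<xi>) = (\<Sum>i<n. (cmod ((T ^\<^sub>m k *\<^sub>v \<xi>) $ i))\<^sup>2)"
      proof -
        have d: "dim_vec (T ^\<^sub>m k *\<^sub>v \<xi>) = n" using Tkc T by simp
        show ?thesis unfolding nsq_def d by (rule refl)
      qed
      also have "\<dots> \<le> (\<Sum>i<n. ((c ^ k * C) * X)\<^sup>2)"
        by (intro sum_mono power_mono e) auto
      also have "\<dots> = Q * (c\<^sup>2) ^ k" unfolding Q_def by (simp add: power_mult_distrib power_mult[symmetric] mult.commute mult_ac power_even_eq)
      finally show ?thesis .
    qed
    define y where "y = nsq \<xi> / (Q + 1)"
    have y: "y > 0" using xpos Q unfolding y_def by auto
    have c2: "c\<^sup>2 < 1" using c by (simp add: power_less_one_iff)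
    from real_arch_pow_inv[OF y c2] obtain k where k: "(c\<^sup>2) ^ k < y" by auto
    have "Q * (c\<^sup>2) ^ k \<le> Q * y" using Q k by (intro mult_left_mono) auto
    also have "Q * y < nsq \<xi>" unfolding y_def using Q xpos by (simp add: field_simps)
    finally have "nsq (T ^\<^sub>m k *\<^sub>v \<xi>) < nsq \<xi>" using bnd[of k] by linarith
    thus ?thesis using pres[of k] by simp
  qed
qed

lemma concat_replicate_nth:
  assumes "length u = g" "0 < g" "t < k * g"
  shows "concat (replicate k u) ! t = u ! (t mod g)"
  using assms(3)
proof (induction k arbitrary: t)
  case 0 thus ?case by simp
next
  case (Suc k)
  show ?case
  proof (cases "t < g")
    case True thus ?thesis using assms by (simp add: nth_append)
  next
    case False
    hence "t - g < k * g" using Suc.prems by auto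
    from Suc.IH[OF this] have "concat (replicate k u) ! (t - g) = u ! ((t - g) mod g)" .
    moreover have "(t - g) mod g = t mod g" using False by (simp add: mod_if)
    ultimately show ?thesis using False assms by (simp add: nth_append)
  qed
qed

lemma length_concat_replicate: "length (concat (replicate k u)) = k * length u"
  by (induction k) auto

definition is_period :: "(nat \<Rightarrow> 'a) \<Rightarrow> nat \<Rightarrow> bool" where
  "is_period f s = (\<forall>t. f (t + s) = f t)"

lemma per_mult: "is_period f s \<Longrightarrow> is_period f (k * s)"
proof (induction k)
  case 0 thus ?case by (simp add: is_period_def)
next
  case (Suc k)
  thus ?case unfolding is_period_def by (metis add.assoc mult_Suc)
qed

lemma per_mult_apply: "is_period f s \<Longrightarrow> f (t + k * s) = f t"
  using per_mult[of f s k] unfolding is_period_def by auto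

lemma per_mod: assumes a: "is_period f a" and b: "is_period f b" shows "is_period f (a mod b)"
  unfolding is_period_def
proof
  fix t
  have "f (t + a mod b) = f (t + a mod b + (a div b) * b)" by (rule per_mult_apply[OF b, symmetric])
  also have "t + a mod b + (a div b) * b = t + a" by simp
  also have "f (t + a) = f t" using a unfolding is_period_def by simp
  finally show "f (t + a mod b) = f t" .
qed

lemma per_gcd: "is_period f a \<Longrightarrow> is_period f b \<Longrightarrow> is_period f (gcd a b)"
proof (induction a b rule: gcd_nat_induct)
  case (step m n)
  from step.IH[OF step.prems(2) per_mod[OF step.prems]] show ?case
    by (metis gcd_red_nat)
qed simp

lemma per_reduce: "is_period f d \<Longrightarrow> f t = f (t mod d)"
  using per_mult_apply[of f d "t mod d" "t div d"] by simp

lemma prime_rot_unique: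
  assumes pw: "prime_word w" and d: "length w = d" and i: "i < d" and j: "j < d"
    and eq: "\<forall>t<d. w ! ((i + t) mod d) = w ! ((j + t) mod d)"
  shows "i = j"
proof -
  have main: "False" if ij: "i < j" "i < d" "j < d" and eq: "\<forall>t<d. w ! ((i + t) mod d) = w ! ((j + t) mod d)"
    for i j
  proof -
    define f where "f t = w ! (t mod d)" for t
    define s where "s = j - i"
    have s: "0 < s" "s < d" using ij unfolding s_def by auto
    have ps: "is_period f s" unfolding is_period_def
    proof
      fix t
      define t0 where "t0 = t mod d"
      define t' where "t' = (t0 + d - i) mod d"
      have d0: "d > 0" using ij by auto
      have t': "t' < d" unfolding t'_def using d0 by simp
      have e1: "(i + t') mod d = t0"
      proof -
        have "(i + t') mod d = (i + (t0 + d - i)) mod d" unfolding t'_def by (simp add: mod_add_right_eq)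
        also have "i + (t0 + d - i) = t0 + d" using ij by simp
        finally show ?thesis unfolding t0_def using d0 by simp
      qed
      have e2: "(j + t') mod d = (t + s) mod d"
      proof -
        have "(j + t') mod d = (j + (t0 + d - i)) mod d" unfolding t'_def by (simp add: mod_add_right_eq)
        also have "j + (t0 + d - i) = (t0 + s) + d" using ij unfolding s_def by simp
        also have "((t0 + s) + d) mod d = (t0 + s) mod d" by simp
        also have "(t0 + s) mod d = (t + s) mod d" unfolding t0_def by (simp add: mod_add_left_eq)
        finally show ?thesis .
      qed
      from eq t' have "w ! ((i + t') mod d) = w ! ((j + t') mod d)" by auto
      thus "f (t + s) = f t" unfolding f_def e1 e2 t0_def by simp
    qed
    have pd: "is_period f d" unfolding is_period_def f_def by simp
    define g where "g = gcd s d"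
    have pg: "is_period f g" unfolding g_def by (rule per_gcd[OF ps pd])
    have g: "0 < g" "g < d" "g dvd d" unfolding g_def using s
      by (auto simp: gcd_le1_nat intro: le_less_trans[OF gcd_le1_nat])
    obtain q where q: "d = g * q" using g by (auto elim: dvdE)
    have q2: "q \<ge> 2"
    proof (rule ccontr)
      assume "\<not> q \<ge> 2"
      hence "q = 0 \<or> q = 1" by auto
      thus False using q g by auto
    qed
    have "w = concat (replicate q (take g w))"
    proof (rule nth_equalityI)
      show "length w = length (concat (replicate q (take g w)))"
        using d q g by (simp add: length_concat_replicate)
      fix t assume t: "t < length w"
      have lt: "length (take g w) = g" using g d by simp
      have "concat (replicate q (take g w)) ! t = take g w ! (t mod g)"
        by (rule concat_replicate_nth[OF lt g(1)]) (use t d q in \<open>simp add: mult.commute\<close>)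
      also have "\<dots> = w ! (t mod g)" using g by simp
      also have "w ! (t mod g) = f (t mod g)" unfolding f_def using g d
        by (metis mod_less mod_less_divisor order.strict_trans)
      also have "f (t mod g) = f t" using per_reduce[OF pg, of t] by simp
      also have "f t = w ! t" unfolding f_def using t d by simp
      finally show "w ! t = concat (replicate q (take g w)) ! t" by simp
    qed
    thus False using pw q2 unfolding prime_word_def by blast
  qed
  show ?thesis
  proof (rule ccontr)
    assume "i \<noteq> j"
    hence "i < j \<or> j < i" by auto
    thus False using main[of i j] main[of j i] i j eq by auto
  qed
qed

lemma least_period_prime:
  assumes k: "0 < k" "is_period p k"
  defines "d \<equiv> LEAST d. 0 < d \<and> is_period p d"
  shows "0 < d" "is_period p d" "prime_word (map p [0..<d])"
proof -
  have ex: "0 < d \<and> is_period p d" unfolding d_def by (rule LeastI[of _ k]) (use k in auto)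
  thus "0 < d" "is_period p d" by auto
  show "prime_word (map p [0..<d])"
    unfolding prime_word_def
  proof
    show "map p [0..<d] \<noteq> []" using ex by simp
    show "\<not> (\<exists>u k. 2 \<le> k \<and> map p [0..<d] = concat (replicate k u))"
    proof
      assume "\<exists>u k. 2 \<le> k \<and> map p [0..<d] = concat (replicate k u)"
      then obtain u k' where k': "2 \<le> k'" and w: "map p [0..<d] = concat (replicate k' u)" by auto
      define g where "g = length u"
      have dg: "d = k' * g" using arg_cong[OF w, of length] unfolding g_def
        by (simp add: length_concat_replicate)
      have g0: "0 < g" using dg ex by (cases g) auto
      have gd: "g < d" using dg k' g0 by (simp add: less_le_trans[of g "2 * g"])
      have gdvd: "g dvd d" using dg by simp
      have pu: "p t = u ! (t mod g)" for t
      proof -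
        have "p t = p (t mod d)" using per_reduce[OF ex[THEN conjunct2]] by simp
        also have "\<dots> = map p [0..<d] ! (t mod d)" using ex by simp
        also have "\<dots> = u ! ((t mod d) mod g)" unfolding w
          by (rule concat_replicate_nth) (use g_def g0 ex dg in \<open>auto simp: mult.commute\<close>)
        also have "(t mod d) mod g = t mod g" using gdvd by (simp add: mod_mod_cancel)
        finally show ?thesis .
      qed
      have "is_period p g" unfolding is_period_def using pu by simp
      hence "d \<le> g" unfolding d_def using g0 by (intro Least_le) auto
      thus False using gd by simp
    qed
  qed
qed

lemma path_Suc: "path_apply (A, B, n) p (Suc k) v = (if p k then B else A) *\<^sub>v path_apply (A, B, n) p k v"
  by simp

lemma pmod_carrier: "is_pmodule (A, B, n) \<Longrightarrow> A \<in> carrier_mat n n \<and> B \<in> carrier_mat n n"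
  unfolding is_pmodule_def by auto

lemma path_carrier: assumes "A \<in> carrier_mat n n" "B \<in> carrier_mat n n" "v \<in> carrier_vec n"
  shows "path_apply (A, B, n) p k v \<in> carrier_vec n"
  by (induction k) (use assms in auto)

lemma path_shift: "path_apply (A, B, n) p (m + k) v = path_apply (A, B, n) (\<lambda>t. p (t + m)) k (path_apply (A, B, n) p m v)"
  by (induction k) (auto simp: add.commute)

lemma path_smult: assumes "A \<in> carrier_mat n n" "B \<in> carrier_mat n n" "v \<in> carrier_vec n"
  shows "path_apply (A, B, n) p k (c \<cdot>\<^sub>v v) = c \<cdot>\<^sub>v path_apply (A, B, n) p k v"
proof (induction k)
  case 0 thus ?case by simp
next
  case (Suc k)
  have "path_apply (A, B, n) p k v \<in> carrier_vec n" using path_carrier assms by blast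
  thus ?case using Suc assms by (auto simp: mult_mat_vec)
qed

fun pmat :: "complex mat \<Rightarrow> complex mat \<Rightarrow> nat \<Rightarrow> (nat \<Rightarrow> bool) \<Rightarrow> nat \<Rightarrow> complex mat" where
  "pmat A B n p 0 = 1\<^sub>m n"
| "pmat A B n p (Suc k) = (if p k then B else A) * pmat A B n p k"

lemma pmat_carrier: "A \<in> carrier_mat n n \<Longrightarrow> B \<in> carrier_mat n n \<Longrightarrow> pmat A B n p k \<in> carrier_mat n n"
  by (induction k) auto

lemma path_pmat: assumes "A \<in> carrier_mat n n" "B \<in> carrier_mat n n" "v \<in> carrier_vec n"
  shows "path_apply (A, B, n) p k v = pmat A B n p k *\<^sub>v v"
proof (induction k)
  case 0 thus ?case using assms by simp
next
  case (Suc k)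
  have "pmat A B n p k \<in> carrier_mat n n" using pmat_carrier assms by blast
  thus ?case using Suc assms by auto
qed

lemma nsq_step: assumes pm: "is_pmodule (A, B, n)" and v: "v \<in> carrier_vec n"
  shows "nsq (path_apply (A, B, n) p (Suc m) v) + nsq ((if p m then A else B) *\<^sub>v path_apply (A, B, n) p m v)
         = nsq (path_apply (A, B, n) p m v)"
proof -
  have c: "A \<in> carrier_mat n n" "B \<in> carrier_mat n n" using pmod_carrier[OF pm] by auto
  have u: "path_apply (A, B, n) p m v \<in> carrier_vec n" using path_carrier c v by blast
  show ?thesis using nsq_pmod[OF pm u] by (cases "p m") (auto simp: add.commute)
qed

lemma nsq_Suc_le: assumes "is_pmodule (A, B, n)" "v \<in> carrier_vec n"
  shows "nsq (path_apply (A, B, n) p (Suc m) v) \<le> nsq (path_apply (A, B, n) p m v)"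
  using nsq_step[OF assms, of p m] nsq_nonneg[of "(if p m then A else B) *\<^sub>v path_apply (A, B, n) p m v"]
  by linarith

lemma nsq_mono: assumes "is_pmodule (A, B, n)" "v \<in> carrier_vec n" "m \<le> m'"
  shows "nsq (path_apply (A, B, n) p m' v) \<le> nsq (path_apply (A, B, n) p m v)"
  using assms(3)
proof (induction m' rule: dec_induct)
  case (step k) thus ?case using nsq_Suc_le[OF assms(1,2), of p k] by linarith
qed simp

lemma contained_iff: assumes "v \<in> carrier_vec n"
  shows "contained_in_ray (A, B, n) v p \<longleftrightarrow> v \<noteq> 0\<^sub>v n \<and> (\<forall>m. nsq (path_apply (A, B, n) p m v) = nsq v)"
  using assms unfolding contained_in_ray_def vnorm_eq_iff by auto

lemma contained_kill: assumes pm: "is_pmodule (A, B, n)" and v: "v \<in> carrier_vec n"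
  and c: "contained_in_ray (A, B, n) v p"
  shows "(if p m then A else B) *\<^sub>v path_apply (A, B, n) p m v = 0\<^sub>v n"
proof -
  have cc: "A \<in> carrier_mat n n" "B \<in> carrier_mat n n" using pmod_carrier[OF pm] by auto
  have u: "path_apply (A, B, n) p m v \<in> carrier_vec n" using path_carrier cc v by blast
  have "nsq ((if p m then A else B) *\<^sub>v path_apply (A, B, n) p m v) = 0"
  proof -
    have h: "nsq (path_apply (A, B, n) p (Suc m) v) = nsq v" "nsq (path_apply (A, B, n) p m v) = nsq v"
      using c[unfolded contained_iff[OF v]] by blast+
    show ?thesis using nsq_step[OF pm v, of p m] h by linarith
  qed
  thus ?thesis using nsq_zero_iff[of _ n] u cc by (cases "p m") auto
qed

definition gam :: "bool list \<Rightarrow> complex \<Rightarrow> nat \<Rightarrow> complex" where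
  "gam w \<phi> i = (if i = length w - 1 then \<phi> else 1)"

definition Xm :: "bool list \<Rightarrow> complex \<Rightarrow> bool \<Rightarrow> complex mat" where
  "Xm w \<phi> x = (if x then B_w w else A_w w) * D_phi (length w) \<phi>"

lemma Xm_carrier: "Xm w \<phi> x \<in> carrier_mat (length w) (length w)"
  unfolding Xm_def A_w_def B_w_def D_phi_def Let_def by auto

lemma Xm_entry: assumes "j < length w" "i < length w"
  shows "Xm w \<phi> x $$ (j, i) = (if j = Suc i mod length w \<and> w ! i = x then gam w \<phi> i else 0)"
proof -
  let ?d = "length w"
  let ?X = "if x then B_w w else A_w w"
  have "Xm w \<phi> x $$ (j, i) = (\<Sum>k\<in>{0..<?d}. ?X $$ (j, k) * (if k = i then gam w \<phi> i else 0))"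
    using assms unfolding Xm_def by (auto simp: scalar_prod_def A_w_def B_w_def D_phi_def gam_def Let_def intro!: sum.cong)
  also have "\<dots> = ?X $$ (j, i) * gam w \<phi> i"
    using assms by (simp add: if_distrib[of "\<lambda>z. _ * z"] sum.delta cong: if_cong)
  also have "\<dots> = (if j = Suc i mod length w \<and> w ! i = x then gam w \<phi> i else 0)"
    using assms by (auto simp: A_w_def B_w_def Let_def)
  finally show ?thesis .
qed

lemma m_wphi_eq: "m_wphi w \<phi> = (Xm w \<phi> False, Xm w \<phi> True, length w)"
  unfolding m_wphi_def Xm_def by simp

lemma ip_zero_left: "ip (0\<^sub>v n) v = 0" unfolding ip_def by simp
lemma ip_zero_right: "dim_vec u = n \<Longrightarrow> ip u (0\<^sub>v n) = 0" unfolding ip_def by simp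
lemma ip_cnj: "dim_vec u = dim_vec v \<Longrightarrow> ip v u = cnj (ip u v)"
  unfolding ip_def by (simp add: mult.commute)

locale orbit =
  fixes A B :: "complex mat" and n :: nat and q :: "nat \<Rightarrow> bool" and \<zeta> :: "complex vec"
  assumes pm: "is_pmodule (A, B, n)" and zc: "\<zeta> \<in> carrier_vec n"
    and cont: "contained_in_ray (A, B, n) \<zeta> q"
begin

definition z :: "nat \<Rightarrow> complex vec" where "z k = path_apply (A, B, n) q k \<zeta>"

lemma AB: "A \<in> carrier_mat n n" "B \<in> carrier_mat n n" using pmod_carrier[OF pm] by auto

lemma z_carrier: "z k \<in> carrier_vec n" unfolding z_def using path_carrier AB zc by blast

lemma z_nsq: "nsq (z k) = nsq \<zeta>" unfolding z_def using cont[unfolded contained_iff[OF zc]] by blast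

lemma z_step: "(if x then B else A) *\<^sub>v z k = (if q k = x then z (Suc k) else 0\<^sub>v n)"
proof (cases "q k = x")
  case True thus ?thesis unfolding z_def by simp
next
  case False
  have "(if q k then A else B) *\<^sub>v z k = 0\<^sub>v n" unfolding z_def by (rule contained_kill[OF pm zc cont])
  thus ?thesis using False by (cases x) auto
qed

lemma ip_diff: assumes "q a \<noteq> q b" shows "ip (z a) (z b) = 0"
proof -
  have "ip (A *\<^sub>v z a) (A *\<^sub>v z b) + ip (B *\<^sub>v z a) (B *\<^sub>v z b) = ip (z a) (z b)"
    by (rule ip_pmod[OF pm z_carrier z_carrier])
  moreover have "ip (A *\<^sub>v z a) (A *\<^sub>v z b) = 0"
    using z_step[of False a] z_step[of False b] assms z_carrier[of a] z_carrier[of "Suc a"]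
    by (cases "q a") (auto simp: ip_zero_left ip_zero_right)
  moreover have "ip (B *\<^sub>v z a) (B *\<^sub>v z b) = 0"
    using z_step[of True a] z_step[of True b] assms z_carrier[of a] z_carrier[of "Suc a"]
    by (cases "q a") (auto simp: ip_zero_left ip_zero_right)
  ultimately show ?thesis by simp
qed

lemma ip_same: assumes "q a = q b" shows "ip (z (Suc a)) (z (Suc b)) = ip (z a) (z b)"
proof -
  have "ip (A *\<^sub>v z a) (A *\<^sub>v z b) + ip (B *\<^sub>v z a) (B *\<^sub>v z b) = ip (z a) (z b)"
    by (rule ip_pmod[OF pm z_carrier z_carrier])
  thus ?thesis
    using z_step[of False a] z_step[of False b] z_step[of True a] z_step[of True b] assms z_carrier[of a] z_carrier[of "Suc a"]
    by (cases "q a") (auto simp: ip_zero_left ip_zero_right)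
qed

lemma ip_shift: assumes "\<forall>t<m. q (i + t) = q (j + t)" shows "ip (z i) (z j) = ip (z (i + m)) (z (j + m))"
  using assms
proof (induction m)
  case 0 thus ?case by simp
next
  case (Suc m)
  hence "ip (z i) (z j) = ip (z (i + m)) (z (j + m))" by auto
  also have "\<dots> = ip (z (Suc (i + m))) (z (Suc (j + m)))"
    using Suc.prems by (intro ip_same[symmetric]) auto
  finally show ?case by simp
qed

lemma ip_orth: assumes "\<exists>t. q (i + t) \<noteq> q (j + t)" shows "ip (z i) (z j) = 0"
proof -
  define t0 where "t0 = (LEAST t. q (i + t) \<noteq> q (j + t))"
  have t0: "q (i + t0) \<noteq> q (j + t0)" unfolding t0_def using assms by (rule LeastI_ex)
  have "\<forall>t<t0. q (i + t) = q (j + t)" unfolding t0_def using not_less_Least by blast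
  from ip_shift[OF this] ip_diff[OF t0] show ?thesis by simp
qed

end

lemma sum_single:
  fixes c d :: nat
  assumes "c < d"
  shows "(\<Sum>k\<in>{0..<d}. f k * (if k = c \<and> P then g else 0)) = (if P then f c * g else (0::complex))"
proof -
  have "(\<Sum>k\<in>{0..<d}. f k * (if k = c \<and> P then g else 0)) = (\<Sum>k\<in>{0..<d}. if k = c then (if P then f k * g else 0) else 0)"
    by (intro sum.cong) auto
  also have "\<dots> = (if P then f c * g else 0)"
  proof (cases P)
    case True
    have "(\<Sum>k\<in>{0..<d}. if k = c then (if P then f k * g else 0) else 0) = (\<Sum>k\<in>{0..<d}. if k = c then f k * g else 0)"
      using True by (intro sum.cong) auto
    also have "\<dots> = f c * g" using assms by (simp add: sum.delta)
    finally show ?thesis using True by simp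
  qed simp
  finally show ?thesis .
qed

lemma mat_eq_by_vec:
  fixes M N :: "complex mat"
  assumes M: "M \<in> carrier_mat n n" and N: "N \<in> carrier_mat n n"
    and eq: "\<And>y. y \<in> carrier_vec n \<Longrightarrow> M *\<^sub>v y = N *\<^sub>v y"
  shows "M = N"
proof (rule eq_matI)
  fix i j assume ij: "i < dim_row N" "j < dim_col N"
  have "(M *\<^sub>v unit_vec n j) $ i = (N *\<^sub>v unit_vec n j) $ i" using eq[of "unit_vec n j"] by simp
  thus "M $$ (i, j) = N $$ (i, j)" using ij M N by simp
qed (use M N in auto)

lemma mult_zero_vec_right: "U \<in> carrier_mat n d \<Longrightarrow> U *\<^sub>v 0\<^sub>v d = (0\<^sub>v n :: complex vec)"
  by (intro eq_vecI) auto

lemma surj_core: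
  assumes pm: "is_pmodule (A, B, n)"
    and irr: "\<forall>V. is_submodule (A, B, n) V \<longrightarrow> V = {0\<^sub>v n} \<or> V = carrier_vec n"
    and pw: "prime_word w" and d: "length w = d"
    and qw: "\<forall>t. q t = w ! (t mod d)"
    and xi: "\<xi> \<in> carrier_vec n" "contained_in_ray (A, B, n) \<xi> q"
  shows "\<exists>\<phi>. cmod \<phi> = 1 \<and> unit_equiv (m_wphi w \<phi>) (A, B, n)"
proof -
  have AB: "A \<in> carrier_mat n n" "B \<in> carrier_mat n n" using pmod_carrier[OF pm] by auto
  have d0: "0 < d" using pw d unfolding prime_word_def by auto
  have qd: "(\<lambda>t. q (t + d)) = q" using qw by auto
  define T where "T = pmat A B n q d"
  have Tc: "T \<in> carrier_mat n n" unfolding T_def using pmat_carrier AB by blast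
  have pT: "T *\<^sub>v v = path_apply (A, B, n) q d v" if "v \<in> carrier_vec n" for v
    unfolding T_def using path_pmat[OF AB that] by simp
  have pow: "T ^\<^sub>m j *\<^sub>v v = path_apply (A, B, n) q (d * j) v" if "v \<in> carrier_vec n" for v j
    using that
  proof (induction j arbitrary: v)
    case 0
    have "dim_row T = n" using Tc by simp
    thus ?case using 0 by simp
  next
    case (Suc j)
    have Tv: "T *\<^sub>v v \<in> carrier_vec n" using Tc Suc.prems by simp
    have "T ^\<^sub>m Suc j *\<^sub>v v = T ^\<^sub>m j *\<^sub>v (T *\<^sub>v v)"
      using Tc Suc.prems by (simp add: assoc_mult_mat_vec[of _ n n _ n])
    also have "\<dots> = path_apply (A, B, n) q (d * j) (path_apply (A, B, n) q d v)"
      using Suc.IH[OF Tv] pT[OF Suc.prems] by simp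
    also have "\<dots> = path_apply (A, B, n) (\<lambda>t. q (t + d)) (d * j) (path_apply (A, B, n) q d v)"
      unfolding qd ..
    also have "\<dots> = path_apply (A, B, n) q (d + d * j) v" by (rule path_shift[symmetric])
    finally show ?case by simp
  qed
  have contr: "nsq (T *\<^sub>v v) \<le> nsq v" if "v \<in> carrier_vec n" for v
    using nsq_mono[OF pm that, of 0 d q] pT[OF that] by simp
  from xi(2)[unfolded contained_iff[OF xi(1)]] have xi0: "\<xi> \<noteq> 0\<^sub>v n"
    and xin: "\<And>m. nsq (path_apply (A, B, n) q m \<xi>) = nsq \<xi>" by auto
  have pres: "nsq (T ^\<^sub>m k *\<^sub>v \<xi>) = nsq \<xi>" for k using pow[OF xi(1)] xin by simp
  from eig_unimodular[OF Tc contr xi(1) xi0 pres]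
  obtain \<zeta>0 l where z0: "\<zeta>0 \<in> carrier_vec n" "\<zeta>0 \<noteq> 0\<^sub>v n" "T *\<^sub>v \<zeta>0 = l \<cdot>\<^sub>v \<zeta>0" and l: "cmod l = 1"
    by blast
  have s0: "nsq \<zeta>0 > 0" using nsq_zero_iff[OF z0(1)] nsq_nonneg[of \<zeta>0] z0(2) by auto
  define \<zeta> where "\<zeta> = complex_of_real (1 / sqrt (nsq \<zeta>0)) \<cdot>\<^sub>v \<zeta>0"
  have zc: "\<zeta> \<in> carrier_vec n" unfolding \<zeta>_def using z0 by simp
  have zn: "nsq \<zeta> = 1"
  proof -
    have "cmod (complex_of_real (1 / sqrt (nsq \<zeta>0))) = 1 / sqrt (nsq \<zeta>0)"
      by (simp only: norm_of_real) (use s0 in simp)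
    hence "nsq \<zeta> = (1 / sqrt (nsq \<zeta>0))\<^sup>2 * nsq \<zeta>0" unfolding \<zeta>_def nsq_smult by simp
    also have "\<dots> = 1" using s0 by (simp add: power_divide)
    finally show ?thesis .
  qed
  have z_ne: "\<zeta> \<noteq> 0\<^sub>v n" using zn nsq_zero_iff[OF zc] by auto
  have Tz: "T *\<^sub>v \<zeta> = l \<cdot>\<^sub>v \<zeta>"
    unfolding \<zeta>_def using mult_mat_vec[OF Tc z0(1)] z0(3) by (simp add: smult_smult_assoc mult.commute)
  have ev: "eigenvector T \<zeta> l" unfolding eigenvector_def using Tc zc z_ne Tz by auto
  have zcont: "contained_in_ray (A, B, n) \<zeta> q"
    unfolding contained_iff[OF zc]
  proof (intro conjI allI z_ne)
    fix m
    have "path_apply (A, B, n) q (d * m) \<zeta> = l ^ m \<cdot>\<^sub>v \<zeta>"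
      using pow[OF zc, of m] eigenvector_pow[OF Tc ev, of m] by simp
    hence "nsq (path_apply (A, B, n) q (d * m) \<zeta>) = nsq \<zeta>"
      by (simp add: nsq_smult norm_power l)
    moreover have "nsq (path_apply (A, B, n) q (d * m) \<zeta>) \<le> nsq (path_apply (A, B, n) q m \<zeta>)"
      using d0 by (intro nsq_mono[OF pm zc]) auto
    moreover have "nsq (path_apply (A, B, n) q m \<zeta>) \<le> nsq (path_apply (A, B, n) q 0 \<zeta>)"
      by (intro nsq_mono[OF pm zc]) auto
    ultimately show "nsq (path_apply (A, B, n) q m \<zeta>) = nsq \<zeta>" by simp
  qed
  interpret orbit A B n q \<zeta> using pm zc zcont by unfold_locales
  have zd: "z d = l \<cdot>\<^sub>v z 0" unfolding z_def using pT[OF zc] Tz by simp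
  have orth: "ip (z i) (z j) = 0" if "i < d" "j < d" "i \<noteq> j" for i j
  proof (rule ip_orth, rule ccontr)
    assume "\<not> (\<exists>t. q (i + t) \<noteq> q (j + t))"
    hence "\<forall>t<d. w ! ((i + t) mod d) = w ! ((j + t) mod d)" using qw by auto
    from prime_rot_unique[OF pw d that(1,2) this] that(3) show False by simp
  qed
  have zz: "ip (z i) (z i) = 1" for i using ip_self z_nsq zn by simp
  define U where "U = mat n d (\<lambda>(r, j). z j $ r)"
  have Uc: "U \<in> carrier_mat n d" unfolding U_def by simp
  have colU: "col U j = z j" if "j < d" for j
    unfolding U_def using that z_carrier[of j] by (intro eq_vecI) auto
  have aUc: "adj U \<in> carrier_mat d n" unfolding adj_def using Uc by auto
  have aUe: "adj U $$ (a, r) = cnj (z a $ r)" if "a < d" "r < n" for a r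
    unfolding adj_def U_def using that by simp
  have UU1: "adj U * U = 1\<^sub>m d"
  proof (rule eq_matI)
    fix a b assume ab: "a < dim_row (1\<^sub>m d)" "b < dim_col (1\<^sub>m d)"
    hence ab': "a < d" "b < d" by auto
    have "(adj U * U) $$ (a, b) = (\<Sum>r\<in>{0..<n}. row (adj U) a $ r * z b $ r)"
      using ab' aUc Uc by (simp add: scalar_prod_def colU z_carrier[THEN carrier_vecD])
    also have "\<dots> = (\<Sum>r\<in>{0..<n}. cnj (z a $ r) * z b $ r)"
      using aUc ab' by (intro sum.cong refl) (simp add: aUe)
    also have "\<dots> = ip (z b) (z a)" unfolding ip_def using z_carrier[of b]
      by (simp add: atLeast0LessThan mult.commute)
    also have "\<dots> = 1\<^sub>m d $$ (a, b)" using orth[of b a] zz[of a] ab' by auto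
    finally show "(adj U * U) $$ (a, b) = 1\<^sub>m d $$ (a, b)" .
  qed (use aUc Uc in auto)
  have inter: "U * Xm w l x = (if x then B else A) * U" for x
  proof (rule eq_matI)
    fix r j assume rj: "r < dim_row ((if x then B else A) * U)" "j < dim_col ((if x then B else A) * U)"
    hence r: "r < n" and j: "j < d" using AB Uc by (auto split: if_splits)
    have Xc: "Xm w l x \<in> carrier_mat d d" using Xm_carrier[of w l x] d by simp
    have "(U * Xm w l x) $$ (r, j) = (\<Sum>k\<in>{0..<d}. row U r $ k * col (Xm w l x) j $ k)"
      using r j Xc Uc by (simp add: scalar_prod_def)
    also have "\<dots> = (\<Sum>k\<in>{0..<d}. z k $ r * (if k = Suc j mod d \<and> w ! j = x then gam w l j else 0))"
      by (intro sum.cong refl) (use r j Xc Uc in \<open>simp add: U_def Xm_entry d\<close>)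
    also have "\<dots> = (if w ! j = x then z (Suc j mod d) $ r * gam w l j else 0)"
      by (rule sum_single) (use d0 in simp)
    also have "\<dots> = (if q j = x then z (Suc j) $ r else 0)"
    proof (cases "Suc j < d")
      case True
      thus ?thesis using qw j d by (auto simp: gam_def)
    next
      case False
      hence "Suc j = d" using j by simp
      thus ?thesis using qw j d zd z_carrier[of 0] r by (auto simp: gam_def mult.commute)
    qed
    also have "\<dots> = ((if x then B else A) *\<^sub>v z j) $ r"
      using z_step[of x j] r by auto
    also have "\<dots> = ((if x then B else A) * U) $$ (r, j)"
      using r j AB Uc colU[OF j] by (auto simp: split: if_splits)
    finally show "(U * Xm w l x) $$ (r, j) = ((if x then B else A) * U) $$ (r, j)" .
  qed (use AB Uc Xm_carrier[of w l x] d in auto)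
  define R where "R = {U *\<^sub>v y | y. y \<in> carrier_vec d}"
  have sub: "is_submodule (A, B, n) R"
    unfolding is_submodule_def is_subspace_def prod.case
  proof (intro conjI ballI allI)
    show "R \<subseteq> carrier_vec n" unfolding R_def using Uc by auto
    show "0\<^sub>v n \<in> R" unfolding R_def
      by (rule CollectI, rule exI[of _ "0\<^sub>v d"]) (use mult_zero_vec_right[OF Uc] in auto)
  next
    fix u v assume "u \<in> R" "v \<in> R"
    then obtain x y where "u = U *\<^sub>v x" "v = U *\<^sub>v y" "x \<in> carrier_vec d" "y \<in> carrier_vec d"
      unfolding R_def by auto
    thus "u + v \<in> R" unfolding R_def using Uc
      by (intro CollectI exI[of _ "x + y"]) (auto simp: mult_add_distrib_mat_vec)
  next
    fix c v assume "v \<in> R"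
    then obtain y where "v = U *\<^sub>v y" "y \<in> carrier_vec d" unfolding R_def by auto
    thus "c \<cdot>\<^sub>v v \<in> R" unfolding R_def using Uc
      by (intro CollectI exI[of _ "c \<cdot>\<^sub>v y"]) (auto simp: mult_mat_vec)
  next
    fix v assume "v \<in> R"
    then obtain y where v: "v = U *\<^sub>v y" "y \<in> carrier_vec d" unfolding R_def by auto
    have Xc: "Xm w l x \<in> carrier_mat d d" for x using Xm_carrier[of w l x] d by simp
    have e1: "(if x then B else A) *\<^sub>v v = U *\<^sub>v (Xm w l x *\<^sub>v y)" for x
    proof -
      have "(if x then B else A) *\<^sub>v v = ((if x then B else A) * U) *\<^sub>v y"
        using v AB Uc by (auto simp: assoc_mult_mat_vec[of _ n n _ d])
      also have "\<dots> = (U * Xm w l x) *\<^sub>v y" using inter by simp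
      also have "\<dots> = U *\<^sub>v (Xm w l x *\<^sub>v y)" using Uc Xc v by (simp add: assoc_mult_mat_vec[of _ n d _ d])
      finally show ?thesis .
    qed
    have e2: "Xm w l x *\<^sub>v y \<in> carrier_vec d" for x using Xc[of x] v(2) by (rule mult_mat_vec_carrier)
    show "A *\<^sub>v v \<in> R" unfolding R_def using e1[of False] e2[of False] by auto
    show "B *\<^sub>v v \<in> R" unfolding R_def using e1[of True] e2[of True] by auto
  qed
  have z0R: "z 0 \<in> R"
  proof -
    have "U *\<^sub>v unit_vec d 0 = z 0"
      using Uc z_carrier[of 0] d0 by (intro eq_vecI) (auto simp: U_def)
    thus ?thesis unfolding R_def
      by (intro CollectI exI[of _ "unit_vec d 0"]) auto
  qed
  have "z 0 \<noteq> 0\<^sub>v n" using z_nsq[of 0] zn nsq_zero_iff[OF z_carrier[of 0]] by auto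
  hence Rfull: "R = carrier_vec n" using irr sub z0R by auto
  have UU2: "U * adj U = 1\<^sub>m n"
  proof (rule mat_eq_by_vec[of _ n])
    show "U * adj U \<in> carrier_mat n n" using Uc aUc by simp
    show "1\<^sub>m n \<in> carrier_mat n n" by simp
    fix y :: "complex vec" assume "y \<in> carrier_vec n"
    then obtain x where x: "y = U *\<^sub>v x" "x \<in> carrier_vec d" using Rfull unfolding R_def by auto
    have "(U * adj U) *\<^sub>v y = U *\<^sub>v (adj U *\<^sub>v (U *\<^sub>v x))"
      using x Uc aUc by (simp add: assoc_mult_mat_vec[of _ n d _ n])
    also have "adj U *\<^sub>v (U *\<^sub>v x) = (adj U * U) *\<^sub>v x"
      using x Uc aUc by (simp add: assoc_mult_mat_vec[of _ d n _ d])
    also have "\<dots> = x" using UU1 x by simp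
    finally show "(U * adj U) *\<^sub>v y = 1\<^sub>m n *\<^sub>v y" using x Uc by simp
  qed
  have dn: "d = n"
  proof -
    have UE: "U $$ (r, j) = z j $ r" if "r < n" "j < d" for r j unfolding U_def using that by simp
    have t1: "(U * adj U) $$ (i, i) = (\<Sum>a<d. z a $ i * cnj (z a $ i))" if i: "i < n" for i
    proof -
      have "(U * adj U) $$ (i, i) = (\<Sum>a\<in>{0..<d}. row U i $ a * col (adj U) i $ a)"
        using Uc aUc i by (simp add: scalar_prod_def)
      also have "\<dots> = (\<Sum>a\<in>{0..<d}. z a $ i * cnj (z a $ i))"
        using Uc aUc i by (intro sum.cong refl) (simp add: UE aUe)
      finally show ?thesis by (simp add: atLeast0LessThan)
    qed
    have t2: "(adj U * U) $$ (a, a) = (\<Sum>i<n. z a $ i * cnj (z a $ i))" if a: "a < d" for a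
    proof -
      have "(adj U * U) $$ (a, a) = (\<Sum>i\<in>{0..<n}. row (adj U) a $ i * col U a $ i)"
        using Uc aUc a by (simp add: scalar_prod_def)
      also have "\<dots> = (\<Sum>i\<in>{0..<n}. z a $ i * cnj (z a $ i))"
        using Uc aUc a by (intro sum.cong refl) (simp add: UE aUe mult.commute)
      finally show ?thesis by (simp add: atLeast0LessThan)
    qed
    have "(\<Sum>i<n. (U * adj U) $$ (i, i)) = (\<Sum>i<n. \<Sum>a<d. z a $ i * cnj (z a $ i))"
      by (intro sum.cong refl) (simp add: t1)
    also have "\<dots> = (\<Sum>a<d. \<Sum>i<n. z a $ i * cnj (z a $ i))" by (rule sum.swap)
    also have "\<dots> = (\<Sum>a<d. (adj U * U) $$ (a, a))"
      by (intro sum.cong refl) (simp add: t2)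
    finally have "(\<Sum>i<n. (1\<^sub>m n :: complex mat) $$ (i, i)) = (\<Sum>a<d. (1\<^sub>m d :: complex mat) $$ (a, a))"
      using UU1 UU2 by simp
    hence "(of_nat n :: complex) = of_nat d" by simp
    thus ?thesis by simp
  qed
  have "unit_equiv (m_wphi w l) (A, B, n)"
    unfolding m_wphi_eq unit_equiv_def unitary_mat_def
    using dn d Uc UU1 UU2 inter[of False] inter[of True] by auto
  thus ?thesis using l by blast
qed

lemma suc_mod_inj: fixes i k d :: nat assumes "i < d" "k < d" "Suc i mod d = Suc k mod d" shows "i = k"
proof -
  have a: "Suc i mod d = (if Suc i = d then 0 else Suc i)" using assms(1) by (auto simp: mod_if)
  have b: "Suc k mod d = (if Suc k = d then 0 else Suc k)" using assms(2) by (auto simp: mod_if)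
  show ?thesis using a b assms by (auto split: if_splits)
qed

lemma mod_add_inj: fixes a b i d :: nat assumes "a < d" "b < d" "(i + a) mod d = (i + b) mod d" shows "a = b"
proof -
  have gen: "x = y" if "y \<le> x" "x < d" "(i + x) mod d = (i + y) mod d" for x y
  proof -
    have "d dvd (i + x) - (i + y)" using that mod_eq_dvd_iff_nat[of "i + y" "i + x" d] by simp
    hence "d dvd x - y" by simp
    moreover have "x - y < d" using that by simp
    ultimately have "x - y = 0" by (metis dvd_imp_le neq0_conv not_le)
    thus ?thesis using that by simp
  qed
  show ?thesis
  proof (cases "b \<le> a")
    case True thus ?thesis using gen[of b a] assms by simp
  next
    case False thus ?thesis using gen[of a b] assms by simp
  qed
qed

lemma rot_bij: fixes i d :: nat assumes "0 < d" shows "bij_betw (\<lambda>t. (i + t) mod d) {..<d} {..<d}"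
proof -
  have inj: "inj_on (\<lambda>t. (i + t) mod d) {..<d}"
    by (rule inj_onI) (use mod_add_inj in auto)
  moreover have "(\<lambda>t. (i + t) mod d) ` {..<d} \<subseteq> {..<d}" using assms by auto
  ultimately show ?thesis
    by (simp add: bij_betw_def endo_inj_surj)
qed

lemma sum_rot: fixes i d :: nat shows "0 < d \<Longrightarrow> (\<Sum>t<d. f ((i + t) mod d)) = (\<Sum>k<d. f k)"
  using sum.reindex_bij_betw[OF rot_bij[of d i], of f] by simp

lemma prod_rot: fixes i d :: nat shows "0 < d \<Longrightarrow> (\<Prod>t<d. f ((i + t) mod d)) = (\<Prod>k<d. f k)"
  using prod.reindex_bij_betw[OF rot_bij[of d i], of f] by simp

locale model =
  fixes w :: "bool list" and \<phi> :: complex and d :: nat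
  assumes d: "length w = d" and d0: "0 < d" and phi: "cmod \<phi> = 1"
begin

lemma Xc: "Xm w \<phi> x \<in> carrier_mat d d" using Xm_carrier[of w \<phi> x] unfolding d .

lemma Xdims[simp]: "dim_row (Xm w \<phi> x) = d" "dim_col (Xm w \<phi> x) = d" using Xc by auto

lemma gam_norm: "cmod (gam w \<phi> i) = 1" unfolding gam_def using phi by simp

lemma MV: assumes v: "v \<in> carrier_vec d" and k: "k < d"
  shows "(Xm w \<phi> x *\<^sub>v v) $ (Suc k mod d) = (if w ! k = x then gam w \<phi> k * v $ k else 0)"
proof -
  have j: "Suc k mod d < d" using d0 by simp
  have "(Xm w \<phi> x *\<^sub>v v) $ (Suc k mod d) = (\<Sum>i\<in>{0..<d}. row (Xm w \<phi> x) (Suc k mod d) $ i * v $ i)"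
    using Xc v j by (simp add: scalar_prod_def)
  also have "\<dots> = (\<Sum>i\<in>{0..<d}. v $ i * (if i = k \<and> w ! k = x then gam w \<phi> k else 0))"
  proof (intro sum.cong refl)
    fix i assume i: "i \<in> {0..<d}"
    have "row (Xm w \<phi> x) (Suc k mod d) $ i = Xm w \<phi> x $$ (Suc k mod d, i)" using Xc i j by simp
    also have "\<dots> = (if Suc k mod d = Suc i mod d \<and> w ! i = x then gam w \<phi> i else 0)"
      using Xm_entry[of "Suc k mod d" w i \<phi> x] i j d by simp
    also have "\<dots> = (if i = k \<and> w ! k = x then gam w \<phi> k else 0)"
      using suc_mod_inj[of i d k] i k by auto
    finally show "row (Xm w \<phi> x) (Suc k mod d) $ i * v $ i = v $ i * (if i = k \<and> w ! k = x then gam w \<phi> k else 0)"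
      by simp
  qed
  also have "\<dots> = (if w ! k = x then v $ k * gam w \<phi> k else 0)" by (rule sum_single[OF k])
  finally show ?thesis by (simp add: mult.commute)
qed

abbreviation "MM \<equiv> m_wphi w \<phi>"

lemma MM_eq: "MM = (Xm w \<phi> False, Xm w \<phi> True, d)" using m_wphi_eq d by simp

lemma path_MM_Suc: "path_apply MM q (Suc m) v = Xm w \<phi> (q m) *\<^sub>v path_apply MM q m v"
  unfolding MM_eq by (cases "q m") auto

lemma path_MM_carrier: "v \<in> carrier_vec d \<Longrightarrow> path_apply MM q m v \<in> carrier_vec d"
proof (induction m)
  case (Suc m)
  show ?case unfolding path_MM_Suc by (rule mult_mat_vec_carrier[OF Xc Suc.IH[OF Suc.prems]])
qed simp

definition fac :: "(nat \<Rightarrow> bool) \<Rightarrow> nat \<Rightarrow> nat \<Rightarrow> complex" where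
  "fac q i m = (\<Prod>t<m. if w ! ((i + t) mod d) = q t then gam w \<phi> ((i + t) mod d) else 0)"

lemma PC: assumes v: "v \<in> carrier_vec d" and i: "i < d"
  shows "path_apply MM q m v $ ((i + m) mod d) = v $ i * fac q i m"
proof (induction m)
  case 0 thus ?case using i by (simp add: fac_def)
next
  case (Suc m)
  have e: "(i + Suc m) mod d = Suc ((i + m) mod d) mod d" by (simp add: mod_Suc_eq)
  have k: "(i + m) mod d < d" using d0 by simp
  have "path_apply MM q (Suc m) v $ ((i + Suc m) mod d)
      = (Xm w \<phi> (q m) *\<^sub>v path_apply MM q m v) $ (Suc ((i + m) mod d) mod d)"
    unfolding path_MM_Suc e ..
  also have "\<dots> = (if w ! ((i + m) mod d) = q m then gam w \<phi> ((i + m) mod d) * (v $ i * fac q i m) else 0)"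
    using MV[OF path_MM_carrier[OF v] k] Suc by simp
  also have "\<dots> = v $ i * fac q i (Suc m)" by (simp add: fac_def)
  finally show ?case .
qed

lemma prod_indicator: fixes m :: nat shows "(\<Prod>t<m. if P t then 1 else 0 :: real) = (if \<forall>t<m. P t then 1 else 0)"
  by (induction m) (auto simp: less_Suc_eq)

lemma fac_norm: "cmod (fac q i m) = (if \<forall>t<m. w ! ((i + t) mod d) = q t then 1 else 0)"
proof -
  have "cmod (fac q i m) = (\<Prod>t<m. cmod (if w ! ((i + t) mod d) = q t then gam w \<phi> ((i + t) mod d) else 0))"
    unfolding fac_def by (simp add: prod_norm)
  also have "\<dots> = (\<Prod>t<m. if w ! ((i + t) mod d) = q t then 1 else 0)"
    by (intro prod.cong refl) (simp add: gam_norm)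
  finally show ?thesis by (simp add: prod_indicator)
qed

lemma NF: assumes v: "v \<in> carrier_vec d"
  shows "nsq (path_apply MM q m v) = (\<Sum>i<d. if \<forall>t<m. w ! ((i + t) mod d) = q t then (cmod (v $ i))\<^sup>2 else 0)"
proof -
  have "nsq (path_apply MM q m v) = (\<Sum>j<d. (cmod (path_apply MM q m v $ j))\<^sup>2)"
  proof -
    have "dim_vec (path_apply MM q m v) = d" using path_MM_carrier[OF v] by auto
    thus ?thesis unfolding nsq_def by simp
  qed
  also have "\<dots> = (\<Sum>i<d. (cmod (path_apply MM q m v $ ((m + i) mod d)))\<^sup>2)"
    by (rule sum_rot[OF d0, symmetric])
  also have "\<dots> = (\<Sum>i<d. if \<forall>t<m. w ! ((i + t) mod d) = q t then (cmod (v $ i))\<^sup>2 else 0)"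
  proof (intro sum.cong refl)
    fix i assume i: "i \<in> {..<d}"
    define P where "P = (\<forall>t<m. w ! ((i + t) mod d) = q t)"
    have fn: "cmod (fac q i m) = (if P then 1 else 0)" using fac_norm unfolding P_def by simp
    have "path_apply MM q m v $ ((m + i) mod d) = v $ i * fac q i m"
      using PC[OF v, of i q m] i by (simp add: add.commute)
    hence "(cmod (path_apply MM q m v $ ((m + i) mod d)))\<^sup>2 = (if P then (cmod (v $ i))\<^sup>2 else 0)"
      by (cases P) (simp_all add: norm_mult fn)
    thus "(cmod (path_apply MM q m v $ ((m + i) mod d)))\<^sup>2 = (if \<forall>t<m. w ! ((i + t) mod d) = q t then (cmod (v $ i))\<^sup>2 else 0)"
      unfolding P_def .
  qed
  finally show ?thesis .
qed

lemma contained_MM: assumes v: "v \<in> carrier_vec d"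
  shows "contained_in_ray MM v q \<longleftrightarrow> v \<noteq> 0\<^sub>v d \<and> (\<forall>i<d. v $ i \<noteq> 0 \<longrightarrow> (\<forall>t. w ! ((i + t) mod d) = q t))"
proof -
  have cv: "contained_in_ray MM v q \<longleftrightarrow> v \<noteq> 0\<^sub>v d \<and> (\<forall>m. nsq (path_apply MM q m v) = nsq v)"
    unfolding MM_eq by (rule contained_iff[OF v])
  have nv: "nsq v = (\<Sum>i<d. (cmod (v $ i))\<^sup>2)" unfolding nsq_def using v by simp
  have "(\<forall>m. nsq (path_apply MM q m v) = nsq v) \<longleftrightarrow> (\<forall>i<d. v $ i \<noteq> 0 \<longrightarrow> (\<forall>t. w ! ((i + t) mod d) = q t))"
  proof
    assume all: "\<forall>m. nsq (path_apply MM q m v) = nsq v"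
    show "\<forall>i<d. v $ i \<noteq> 0 \<longrightarrow> (\<forall>t. w ! ((i + t) mod d) = q t)"
    proof (intro allI impI, rule ccontr)
      fix i t assume i: "i < d" "v $ i \<noteq> 0" and t: "w ! ((i + t) mod d) \<noteq> q t"
      have "(\<Sum>i<d. if \<forall>t'<Suc t. w ! ((i + t') mod d) = q t' then (cmod (v $ i))\<^sup>2 else 0) < (\<Sum>i<d. (cmod (v $ i))\<^sup>2)"
        by (rule sum_strict_mono_ex1) (use i t in auto)
      moreover have "nsq (path_apply MM q (Suc t) v) = nsq v" using all by blast
      ultimately show False using NF[OF v, of q "Suc t"] nv by linarith
    qed
  next
    assume H: "\<forall>i<d. v $ i \<noteq> 0 \<longrightarrow> (\<forall>t. w ! ((i + t) mod d) = q t)"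
    show "\<forall>m. nsq (path_apply MM q m v) = nsq v"
    proof
      fix m
      show "nsq (path_apply MM q m v) = nsq v" unfolding NF[OF v] nv
      proof (intro sum.cong refl)
        fix i assume i: "i \<in> {..<d}"
        show "(if \<forall>t<m. w ! ((i + t) mod d) = q t then (cmod (v $ i))\<^sup>2 else 0) = (cmod (v $ i))\<^sup>2"
        proof (cases "v $ i = 0")
          case False thus ?thesis using H i by auto
        qed simp
      qed
    qed
  qed
  thus ?thesis using cv by simp
qed

end

lemma subspace_full: assumes V: "is_subspace n V" and u: "\<And>j. j < n \<Longrightarrow> unit_vec n j \<in> V"
  shows "V = carrier_vec n"
proof
  show "V \<subseteq> carrier_vec n" using V unfolding is_subspace_def by auto
  show "carrier_vec n \<subseteq> V"
  proof
    fix v :: "complex vec" assume v: "v \<in> carrier_vec n"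
    define wk where "wk k = vec n (\<lambda>l. if l < k then v $ l else 0)" for k
    have "wk k \<in> V" if "k \<le> n" for k
      using that
    proof (induction k)
      case 0
      have "wk 0 = 0\<^sub>v n" unfolding wk_def by (intro eq_vecI) auto
      thus ?case using V unfolding is_subspace_def by auto
    next
      case (Suc k)
      have k: "k < n" using Suc.prems by simp
      have "wk (Suc k) = wk k + (v $ k) \<cdot>\<^sub>v unit_vec n k"
        unfolding wk_def by (intro eq_vecI) (auto simp: unit_vec_def less_Suc_eq)
      moreover have "(v $ k) \<cdot>\<^sub>v unit_vec n k \<in> V" using V u[OF k] unfolding is_subspace_def by auto
      moreover have "wk k \<in> V" using Suc by simp
      ultimately show ?case using V unfolding is_subspace_def by auto
    qed
    moreover have "wk n = v" unfolding wk_def using v by (intro eq_vecI) auto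
    ultimately show "v \<in> V" by auto
  qed
qed

lemma subspace_carrier: "is_subspace n (carrier_vec n)"
  unfolding is_subspace_def by auto

lemma span_sub: "S \<subseteq> carrier_vec n \<Longrightarrow> span_in n S \<subseteq> carrier_vec n"
  unfolding span_in_def using subspace_carrier by auto

lemma span_sup: "S \<subseteq> span_in n S"
  unfolding span_in_def by auto

lemma span_empty: "span_in n {} = {0\<^sub>v n}"
proof -
  have "is_subspace n {0\<^sub>v n}" unfolding is_subspace_def by auto
  hence "span_in n {} \<subseteq> {0\<^sub>v n}" unfolding span_in_def by auto
  moreover have "0\<^sub>v n \<in> span_in n {}" unfolding span_in_def is_subspace_def by auto
  ultimately show ?thesis by auto
qed

lemma submod_path: assumes "is_submodule (A, B, n) V" "v \<in> V"
  shows "path_apply (A, B, n) p m v \<in> V"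
  using assms unfolding is_submodule_def by (induction m) auto

lemma carrier_ne_zero: "0 < n \<Longrightarrow> carrier_vec n \<noteq> {0\<^sub>v n :: complex vec}"
proof
  assume "0 < n" "carrier_vec n = {0\<^sub>v n :: complex vec}"
  moreover have "unit_vec n 0 \<in> (carrier_vec n :: complex vec set)" by simp
  ultimately have "unit_vec n 0 = (0\<^sub>v n :: complex vec)" by auto
  hence "(unit_vec n 0 :: complex vec) $ 0 = 0\<^sub>v n $ 0" by simp
  thus False using \<open>0 < n\<close> by simp
qed

lemma irr_Hcomp: assumes irr: "irreducible_pmod (A, B, n)" shows "H_comp (A, B, n) = carrier_vec n"
proof -
  from irr have pm: "is_pmodule (A, B, n)" and n: "0 < n"
    and I: "\<forall>V. is_submodule (A, B, n) V \<longrightarrow> V = {0\<^sub>v n} \<or> V = carrier_vec n"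
    unfolding irreducible_pmod_def by auto
  have AB: "A \<in> carrier_mat n n" "B \<in> carrier_mat n n" using pmod_carrier[OF pm] by auto
  have sc: "is_submodule (A, B, n) (carrier_vec n)"
    unfolding is_submodule_def using subspace_carrier AB by auto
  have "irreducible_submodule (A, B, n) (carrier_vec n)"
    unfolding irreducible_submodule_def using sc carrier_ne_zero[OF n] I by auto
  hence c1: "carrier_vec n \<subseteq> \<Union>{V. irreducible_submodule (A, B, n) V}" by auto
  have c2: "\<Union>{V. irreducible_submodule (A, B, n) V} \<subseteq> carrier_vec n"
    unfolding irreducible_submodule_def is_submodule_def is_subspace_def by auto
  have "\<Union>{V. irreducible_submodule (A, B, n) V} = carrier_vec n" using c1 c2 by auto
  moreover have "span_in n (carrier_vec n) = carrier_vec n"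
    using span_sub[of "carrier_vec n" n] span_sup[of "carrier_vec n" n] by auto
  ultimately show ?thesis unfolding H_comp_def by simp
qed

lemma ex_contained: assumes "irr_atomic (A, B, n)"
  shows "\<exists>\<xi> p. \<xi> \<in> carrier_vec n \<and> periodic_ray p \<and> contained_in_ray (A, B, n) \<xi> p"
proof (rule ccontr)
  assume nex: "\<not> ?thesis"
  from assms have irr: "irreducible_pmod (A, B, n)" and at: "atomic_pmod (A, B, n)"
    unfolding irr_atomic_def by auto
  have n: "0 < n" using irr unfolding irreducible_pmod_def by auto
  have hc: "H_comp (A, B, n) = carrier_vec n" by (rule irr_Hcomp[OF irr])
  have "{v \<in> H_comp (A, B, n). \<exists>p. periodic_ray p \<and> contained_in_ray (A, B, n) v p} = {}"
    using nex hc by auto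
  hence "H_atom (A, B, n) = {0\<^sub>v n}" by (simp only: H_atom_def prod.case span_empty)
  thus False using at hc carrier_ne_zero[OF n] unfolding atomic_pmod_def by simp
qed

context model
begin

lemma adj_entry: "a < d \<Longrightarrow> k < d \<Longrightarrow> adj (Xm w \<phi> x) $$ (a, k) = cnj (Xm w \<phi> x $$ (k, a))"
  unfolding adj_def by simp

lemma gam_cnj: "cnj (gam w \<phi> a) * gam w \<phi> a = 1"
proof -
  have "gam w \<phi> a * cnj (gam w \<phi> a) = complex_of_real ((cmod (gam w \<phi> a))\<^sup>2)"
    by (rule complex_norm_square[symmetric])
  thus ?thesis using gam_norm by (simp add: mult.commute)
qed

lemma AXX: assumes a: "a < d" and b: "b < d"
  shows "(adj (Xm w \<phi> x) * Xm w \<phi> x) $$ (a, b) = (if a = b \<and> w ! a = x then 1 else 0)"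
proof -
  let ?X = "Xm w \<phi> x"
  have ac: "adj ?X \<in> carrier_mat d d" unfolding adj_def by auto
  have c: "Suc a mod d < d" using d0 by simp
  have "(adj ?X * ?X) $$ (a, b) = (\<Sum>k\<in>{0..<d}. row (adj ?X) a $ k * col ?X b $ k)"
    using ac a b by (simp add: scalar_prod_def)
  also have "\<dots> = (\<Sum>k\<in>{0..<d}. ?X $$ (k, b) * (if k = Suc a mod d \<and> w ! a = x then cnj (gam w \<phi> a) else 0))"
  proof (intro sum.cong refl)
    fix k assume k: "k \<in> {0..<d}"
    have "row (adj ?X) a $ k = cnj (?X $$ (k, a))" using ac a k by (simp add: adj_entry)
    also have "\<dots> = (if k = Suc a mod d \<and> w ! a = x then cnj (gam w \<phi> a) else 0)"
      using Xm_entry[of k w a \<phi> x] k a d by simp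
    finally show "row (adj ?X) a $ k * col ?X b $ k = ?X $$ (k, b) * (if k = Suc a mod d \<and> w ! a = x then cnj (gam w \<phi> a) else 0)"
      using k b by simp
  qed
  also have "\<dots> = (if w ! a = x then ?X $$ (Suc a mod d, b) * cnj (gam w \<phi> a) else 0)"
    by (rule sum_single[OF c])
  also have "\<dots> = (if a = b \<and> w ! a = x then 1 else 0)"
  proof -
    have "?X $$ (Suc a mod d, b) = (if Suc a mod d = Suc b mod d \<and> w ! b = x then gam w \<phi> b else 0)"
      using Xm_entry[of "Suc a mod d" w b \<phi> x] c b d by simp
    moreover have "(Suc a mod d = Suc b mod d) = (a = b)" using suc_mod_inj[OF a b] by auto
    ultimately show ?thesis using gam_cnj[of a] by (auto simp: mult.commute)
  qed
  finally show ?thesis .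
qed

lemma MM_pmod: "is_pmodule MM"
  unfolding MM_eq is_pmodule_def prod.case
proof (intro conjI Xc)
  have c: "adj (Xm w \<phi> x) \<in> carrier_mat d d" for x unfolding adj_def by auto
  show "adj (Xm w \<phi> False) * Xm w \<phi> False + adj (Xm w \<phi> True) * Xm w \<phi> True = 1\<^sub>m d"
  proof (rule eq_matI)
    fix a b assume "a < dim_row (1\<^sub>m d)" "b < dim_col (1\<^sub>m d)"
    hence ab: "a < d" "b < d" by auto
    show "(adj (Xm w \<phi> False) * Xm w \<phi> False + adj (Xm w \<phi> True) * Xm w \<phi> True) $$ (a, b) = 1\<^sub>m d $$ (a, b)"
    proof -
      have dims: "dim_row (adj (Xm w \<phi> True) * Xm w \<phi> True) = d" "dim_col (adj (Xm w \<phi> True) * Xm w \<phi> True) = d"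
        using c[of True] by auto
      have "(adj (Xm w \<phi> False) * Xm w \<phi> False + adj (Xm w \<phi> True) * Xm w \<phi> True) $$ (a, b)
        = (if a = b \<and> w ! a = False then 1 else 0) + (if a = b \<and> w ! a = True then 1 else 0)"
        using ab dims by (simp only: index_add_mat(1) AXX)
      thus ?thesis using ab by auto
    qed
  qed (use c in auto)
qed

lemma Xunit: assumes j: "j < d"
  shows "Xm w \<phi> x *\<^sub>v unit_vec d j = (if w ! j = x then gam w \<phi> j \<cdot>\<^sub>v unit_vec d (Suc j mod d) else 0\<^sub>v d)"
proof (rule eq_vecI)
  fix l assume "l < dim_vec (if w ! j = x then gam w \<phi> j \<cdot>\<^sub>v unit_vec d (Suc j mod d) else 0\<^sub>v d)"
  hence l: "l < d" by (auto split: if_splits)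
  have "(Xm w \<phi> x *\<^sub>v unit_vec d j) $ l = Xm w \<phi> x $$ (l, j)" using l j by simp
  also have "\<dots> = (if l = Suc j mod d \<and> w ! j = x then gam w \<phi> j else 0)"
    using Xm_entry[of l w j \<phi> x] l j d by simp
  finally show "(Xm w \<phi> x *\<^sub>v unit_vec d j) $ l = (if w ! j = x then gam w \<phi> j \<cdot>\<^sub>v unit_vec d (Suc j mod d) else 0\<^sub>v d) $ l"
    using l by (auto simp: unit_vec_def)
qed (auto)

lemma prod_gam: "(\<Prod>k<d. gam w \<phi> k) = \<phi>"
proof -
  have "(\<Prod>k<d. gam w \<phi> k) = (\<Prod>k<d. if k = d - 1 then \<phi> else 1)"
    unfolding gam_def using d by simp
  also have "\<dots> = \<phi>" using d0 by (simp add: prod.delta)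
  finally show ?thesis .
qed

lemma gam_ne0: "gam w \<phi> k \<noteq> 0" using gam_norm[of k] by auto

lemma MM_irr: assumes pw: "prime_word w" shows "irreducible_pmod MM"
  unfolding irreducible_pmod_def MM_eq prod.case
proof (intro conjI allI impI d0)
  show "is_pmodule (Xm w \<phi> False, Xm w \<phi> True, d)" using MM_pmod MM_eq by simp
  fix V assume sub: "is_submodule (Xm w \<phi> False, Xm w \<phi> True, d) V"
  have sp: "is_subspace d V" using sub unfolding is_submodule_def by simp
  have clos: "Xm w \<phi> x *\<^sub>v v \<in> V" if "v \<in> V" for v x
    using sub that unfolding is_submodule_def by (cases x) auto
  have smul: "c \<cdot>\<^sub>v v \<in> V" if "v \<in> V" for c v using sp that unfolding is_subspace_def by auto
  show "V = {0\<^sub>v d} \<or> V = carrier_vec d"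
  proof (cases "V = {0\<^sub>v d}")
    case False
    have z: "0\<^sub>v d \<in> V" using sp unfolding is_subspace_def by auto
    then obtain v where vV: "v \<in> V" and v0: "v \<noteq> 0\<^sub>v d" using False by auto
    have v: "v \<in> carrier_vec d" using sp vV unfolding is_subspace_def by auto
    obtain i where i: "i < d" "v $ i \<noteq> 0"
    proof (rule ccontr)
      assume "\<not> thesis"
      hence "\<forall>i<d. v $ i = 0" using that by blast
      hence "v = 0\<^sub>v d" using v by (intro eq_vecI) auto
      thus False using v0 by simp
    qed
    define r where "r t = w ! ((i + t) mod d)" for t
    define u where "u = path_apply MM r d v"
    have uV: "u \<in> V" unfolding u_def MM_eq by (rule submod_path[OF sub vV])
    have uc: "u \<in> carrier_vec d" unfolding u_def by (rule path_MM_carrier[OF v])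
    have ueq: "u = (v $ i * \<phi>) \<cdot>\<^sub>v unit_vec d i"
    proof (rule eq_vecI)
      fix j assume "j < dim_vec ((v $ i * \<phi>) \<cdot>\<^sub>v unit_vec d i)"
      hence j: "j < d" by simp
      have "u $ j = u $ ((j + d) mod d)" using j by simp
      also have "\<dots> = v $ j * fac r j d" unfolding u_def by (rule PC[OF v j])
      also have "\<dots> = ((v $ i * \<phi>) \<cdot>\<^sub>v unit_vec d i) $ j"
      proof (cases "j = i")
        case True
        have "fac r j d = (\<Prod>t<d. gam w \<phi> ((i + t) mod d))"
          unfolding fac_def r_def True by simp
        also have "\<dots> = \<phi>" using prod_rot[OF d0, of "gam w \<phi>" i] prod_gam by simp
        finally show ?thesis using True j by simp
      next
        case False
        have "\<not> (\<forall>t<d. w ! ((j + t) mod d) = w ! ((i + t) mod d))"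
          using prime_rot_unique[OF pw d j i(1)] False by auto
        then obtain t where t: "t < d" "w ! ((j + t) mod d) \<noteq> r t" unfolding r_def by auto
        have "fac r j d = 0" unfolding fac_def using t by (intro prod_zero) auto
        thus ?thesis using False j by (simp add: unit_vec_def)
      qed
      finally show "u $ j = ((v $ i * \<phi>) \<cdot>\<^sub>v unit_vec d i) $ j" .
    qed (use uc in simp)
    have phi0: "\<phi> \<noteq> 0" using phi by auto
    have eiV: "unit_vec d i \<in> V"
    proof -
      have "(1 / (v $ i * \<phi>)) \<cdot>\<^sub>v u \<in> V" by (rule smul[OF uV])
      also have "(1 / (v $ i * \<phi>)) \<cdot>\<^sub>v u = unit_vec d i"
        unfolding ueq smult_smult_assoc using i phi0 by simp
      finally show ?thesis .
    qed
    have ek: "unit_vec d ((i + k) mod d) \<in> V" for k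
    proof (induction k)
      case 0 thus ?case using eiV i by simp
    next
      case (Suc k)
      define j where "j = (i + k) mod d"
      have j: "j < d" unfolding j_def using d0 by simp
      have "Xm w \<phi> (w ! j) *\<^sub>v unit_vec d j \<in> V" using clos Suc unfolding j_def by blast
      hence "gam w \<phi> j \<cdot>\<^sub>v unit_vec d (Suc j mod d) \<in> V" using Xunit[OF j] by simp
      hence "(1 / gam w \<phi> j) \<cdot>\<^sub>v (gam w \<phi> j \<cdot>\<^sub>v unit_vec d (Suc j mod d)) \<in> V" by (rule smul)
      hence "unit_vec d (Suc j mod d) \<in> V" using gam_ne0[of j] by (simp add: smult_smult_assoc)
      moreover have "Suc j mod d = (i + Suc k) mod d" unfolding j_def by (simp add: mod_Suc_eq)
      ultimately show ?case by simp
    qed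
    have "unit_vec d j \<in> V" if j: "j < d" for j
    proof -
      have "(i + (d - i + j)) mod d = j" using i j by simp
      thus ?thesis using ek[of "d - i + j"] by simp
    qed
    hence "V = carrier_vec d" by (rule subspace_full[OF sp])
    thus ?thesis by simp
  qed simp
qed

lemma MM_atomic: assumes pw: "prime_word w" shows "atomic_pmod MM"
proof -
  have hc: "H_comp MM = carrier_vec d" using irr_Hcomp MM_irr[OF pw] MM_eq by metis
  define S where "S = {v \<in> H_comp MM. \<exists>p. periodic_ray p \<and> contained_in_ray MM v p}"
  have ha: "H_atom MM = span_in d S" unfolding S_def H_atom_def MM_eq by simp
  have ej: "unit_vec d j \<in> S" if j: "j < d" for j
  proof -
    define r where "r t = w ! ((j + t) mod d)" for t
    have per: "periodic_ray r" unfolding periodic_ray_def r_def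
      by (rule exI[of _ d]) (use d0 in \<open>simp add: add.assoc[symmetric]\<close>)
    have ne: "unit_vec d j \<noteq> (0\<^sub>v d :: complex vec)"
    proof
      assume "unit_vec d j = (0\<^sub>v d :: complex vec)"
      hence "(unit_vec d j :: complex vec) $ j = 0\<^sub>v d $ j" by simp
      thus False using j by simp
    qed
    have "contained_in_ray MM (unit_vec d j) r"
      unfolding contained_MM[OF unit_vec_carrier] using ne j by (auto simp: r_def unit_vec_def)
    thus ?thesis unfolding S_def hc using per by auto
  qed
  have "span_in d S = carrier_vec d"
  proof
    show "span_in d S \<subseteq> carrier_vec d" by (rule span_sub) (auto simp: S_def hc)
    show "carrier_vec d \<subseteq> span_in d S"
      unfolding span_in_def
    proof (intro subsetI InterI)
      fix v :: "complex vec" and X assume "v \<in> carrier_vec d" "X \<in> {V. is_subspace d V \<and> S \<subseteq> V}"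
      hence "X = carrier_vec d" using subspace_full[of d X] ej by auto
      thus "v \<in> X" using \<open>v \<in> carrier_vec d\<close> by simp
    qed
  qed
  thus ?thesis unfolding atomic_pmod_def ha hc .
qed

end

lemma adj_carrier: "U \<in> carrier_mat n m \<Longrightarrow> adj U \<in> carrier_mat m n"
  unfolding adj_def by auto

lemma adj_adj: "U \<in> carrier_mat n m \<Longrightarrow> adj (adj U) = U"
  unfolding adj_def by (intro eq_matI) auto

lemma adj_one: "adj (1\<^sub>m n) = (1\<^sub>m n :: complex mat)"
  unfolding adj_def by (intro eq_matI) auto

lemma adj_mult: assumes A: "A \<in> carrier_mat n k" and B: "B \<in> carrier_mat k m"
  shows "adj (A * B) = adj B * adj A"
proof (rule eq_matI)
  fix i j assume ij: "i < dim_row (adj B * adj A)" "j < dim_col (adj B * adj A)"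
  hence i: "i < m" and j: "j < n" using A B by (auto simp: adj_def)
  have "adj (A * B) $$ (i, j) = cnj (\<Sum>l\<in>{0..<k}. A $$ (j, l) * B $$ (l, i))"
    unfolding adj_def using A B i j by (simp add: scalar_prod_def)
  also have "\<dots> = (\<Sum>l\<in>{0..<k}. cnj (B $$ (l, i)) * cnj (A $$ (j, l)))"
    by (simp add: mult.commute)
  also have "\<dots> = (adj B * adj A) $$ (i, j)"
    unfolding adj_def using A B i j by (simp add: scalar_prod_def)
  finally show "adj (A * B) $$ (i, j) = (adj B * adj A) $$ (i, j)" .
qed (use A B in \<open>auto simp: adj_def\<close>)

lemma intertwine_adj:
  assumes U: "unitary_mat n U" and X: "X \<in> carrier_mat n n" and Y: "Y \<in> carrier_mat n n"
    and e: "U * X = Y * U"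
  shows "adj U * Y = X * adj U"
proof -
  have Uc: "U \<in> carrier_mat n n" and u1: "adj U * U = 1\<^sub>m n" and u2: "U * adj U = 1\<^sub>m n"
    using U unfolding unitary_mat_def by auto
  have aU: "adj U \<in> carrier_mat n n" using adj_carrier[OF Uc] .
  have "adj U * Y = adj U * Y * (U * adj U)" using aU Y u2 by simp
  also have "\<dots> = adj U * (Y * U) * adj U"
    using aU Y Uc by (simp add: assoc_mult_mat[of _ n n _ n _ n])
  also have "\<dots> = adj U * (U * X) * adj U" using e by simp
  also have "\<dots> = (adj U * U) * X * adj U"
    using aU X Uc by (simp add: assoc_mult_mat[of _ n n _ n _ n])
  also have "\<dots> = X * adj U" using u1 X by simp
  finally show ?thesis .
qed

lemma unitary_adj: "unitary_mat n U \<Longrightarrow> unitary_mat n (adj U)"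
  unfolding unitary_mat_def using adj_adj adj_carrier by metis

lemma unitary_mult: assumes U: "unitary_mat n U" and V: "unitary_mat n V" shows "unitary_mat n (V * U)"
proof -
  have Uc: "U \<in> carrier_mat n n" and u1: "adj U * U = 1\<^sub>m n" and u2: "U * adj U = 1\<^sub>m n"
    using U unfolding unitary_mat_def by auto
  have Vc: "V \<in> carrier_mat n n" and v1: "adj V * V = 1\<^sub>m n" and v2: "V * adj V = 1\<^sub>m n"
    using V unfolding unitary_mat_def by auto
  have aU: "adj U \<in> carrier_mat n n" and aV: "adj V \<in> carrier_mat n n" using adj_carrier Uc Vc by auto
  have adjm: "adj (V * U) = adj U * adj V" by (rule adj_mult[OF Vc Uc])
  have "adj (V * U) * (V * U) = adj U * (adj V * V) * U"
    unfolding adjm using aU aV Vc Uc by (simp add: assoc_mult_mat[of _ n n _ n _ n])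
  also have "\<dots> = 1\<^sub>m n" using v1 u1 aU Uc by simp
  finally have 1: "adj (V * U) * (V * U) = 1\<^sub>m n" .
  have "(V * U) * adj (V * U) = V * (U * adj U) * adj V"
    unfolding adjm using aU aV Vc Uc by (simp add: assoc_mult_mat[of _ n n _ n _ n])
  also have "\<dots> = 1\<^sub>m n" using v2 u2 aV Vc by simp
  finally have 2: "(V * U) * adj (V * U) = 1\<^sub>m n" .
  show ?thesis unfolding unitary_mat_def using 1 2 Uc Vc by auto
qed

lemma ue_refl: "A \<in> carrier_mat n n \<Longrightarrow> B \<in> carrier_mat n n \<Longrightarrow> unit_equiv (A, B, n) (A, B, n)"
  unfolding unit_equiv_def unitary_mat_def prod.case
  by (intro conjI exI[of _ "1\<^sub>m n"]) (auto simp: adj_one)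

lemma ue_sym: assumes c: "A \<in> carrier_mat n n" "B \<in> carrier_mat n n" "A' \<in> carrier_mat n' n'" "B' \<in> carrier_mat n' n'"
  and e: "unit_equiv (A, B, n) (A', B', n')"
  shows "unit_equiv (A', B', n') (A, B, n)"
proof -
  from e obtain U where nn: "n = n'" and U: "unitary_mat n U" and eA: "U * A = A' * U" and eB: "U * B = B' * U"
    unfolding unit_equiv_def by auto
  show ?thesis unfolding unit_equiv_def prod.case
    using nn unitary_adj[OF U] intertwine_adj[OF U c(1) _ eA] intertwine_adj[OF U c(2) _ eB] c(3,4)
    by auto
qed

lemma ue_trans: assumes c: "A \<in> carrier_mat n n" "B \<in> carrier_mat n n"
    "A' \<in> carrier_mat n' n'" "B' \<in> carrier_mat n' n'" "A'' \<in> carrier_mat n'' n''" "B'' \<in> carrier_mat n'' n''"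
  and e1: "unit_equiv (A, B, n) (A', B', n')" and e2: "unit_equiv (A', B', n') (A'', B'', n'')"
  shows "unit_equiv (A, B, n) (A'', B'', n'')"
proof -
  from e1 obtain U where nn: "n = n'" and U: "unitary_mat n U" and eA: "U * A = A' * U" and eB: "U * B = B' * U"
    unfolding unit_equiv_def by auto
  from e2 obtain V where nn': "n' = n''" and V: "unitary_mat n' V" and fA: "V * A' = A'' * V" and fB: "V * B' = B'' * V"
    unfolding unit_equiv_def by auto
  have Uc: "U \<in> carrier_mat n n" using U unfolding unitary_mat_def by auto
  have Vc: "V \<in> carrier_mat n n" using V nn unfolding unitary_mat_def by auto
  have g: "(V * U) * X = X'' * (V * U)" if "U * X = X' * U" "V * X' = X'' * V"
    "X \<in> carrier_mat n n" "X' \<in> carrier_mat n n" "X'' \<in> carrier_mat n n" for X X' X''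
  proof -
    have "(V * U) * X = V * (U * X)" using that Uc Vc by (simp add: assoc_mult_mat[of _ n n _ n _ n])
    also have "\<dots> = V * (X' * U)" using that by simp
    also have "\<dots> = (V * X') * U" using that(4) Uc Vc by (simp add: assoc_mult_mat[of _ n n _ n _ n])
    also have "\<dots> = (X'' * V) * U" using that by simp
    also have "\<dots> = X'' * (V * U)" using that(5) Uc Vc by (simp add: assoc_mult_mat[of _ n n _ n _ n])
    finally show ?thesis .
  qed
  show ?thesis unfolding unit_equiv_def prod.case
    using nn nn' unitary_mult[OF U, of V] V g[OF eA fA] g[OF eB fB] c by auto
qed

lemma irr_atomic_carrier: "irr_atomic (A, B, n) \<Longrightarrow> A \<in> carrier_mat n n \<and> B \<in> carrier_mat n n"
  unfolding irr_atomic_def using pmod_carrier by blast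

lemma ue_equiv: "equiv {M. irr_atomic M} ue_rel"
proof (rule equivI)
  show "ue_rel \<subseteq> {M. irr_atomic M} \<times> {M. irr_atomic M}" unfolding ue_rel_def by auto
  have r: "unit_equiv M M" if "irr_atomic M" for M
  proof -
    obtain A B n where M: "M = (A, B, n)" by (cases M)
    show ?thesis using that ue_refl irr_atomic_carrier unfolding M by blast
  qed
  show "refl_on {M. irr_atomic M} ue_rel"
    unfolding refl_on_def ue_rel_def using r by auto
  have s: "unit_equiv M' M" if a: "irr_atomic M" "irr_atomic M'" "unit_equiv M M'" for M M'
  proof -
    obtain A B n where M: "M = (A, B, n)" by (cases M)
    obtain A' B' n' where M': "M' = (A', B', n')" by (cases M')
    show ?thesis using a ue_sym irr_atomic_carrier unfolding M M' by blast
  qed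
  show "sym ue_rel" unfolding sym_def ue_rel_def using s by blast
  have t: "unit_equiv M M''" if a: "irr_atomic M" "irr_atomic M'" "irr_atomic M''"
    "unit_equiv M M'" "unit_equiv M' M''" for M M' M''
  proof -
    obtain A B n where M: "M = (A, B, n)" by (cases M)
    obtain A' B' n' where M': "M' = (A', B', n')" by (cases M')
    obtain A'' B'' n'' where M'': "M'' = (A'', B'', n'')" by (cases M'')
    show ?thesis using a ue_trans irr_atomic_carrier unfolding M M' M'' by blast
  qed
  show "trans ue_rel" unfolding trans_def ue_rel_def using t by blast
qed

lemma model_irr_atomic: assumes pw: "prime_word w" and phi: "cmod \<phi> = 1"
  shows "irr_atomic (m_wphi w \<phi>)"
proof -
  interpret model w \<phi> "length w" using pw phi unfolding prime_word_def by unfold_locales auto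
  show ?thesis unfolding irr_atomic_def using MM_pmod MM_irr[OF pw] MM_atomic[OF pw] by simp
qed

lemma surj_all: assumes W: "representatives W" and M: "irr_atomic M"
  shows "\<exists>w\<in>W. \<exists>\<phi>\<in>S1. unit_equiv (m_wphi w \<phi>) M"
proof -
  obtain A B n where Me: "M = (A, B, n)" by (cases M)
  have ia: "irr_atomic (A, B, n)" using M Me by simp
  from ex_contained[OF ia] obtain \<xi> p where xi: "\<xi> \<in> carrier_vec n" and per: "periodic_ray p"
    and cont: "contained_in_ray (A, B, n) \<xi> p" by blast
  have pm: "is_pmodule (A, B, n)" and irr: "\<forall>V. is_submodule (A, B, n) V \<longrightarrow> V = {0\<^sub>v n} \<or> V = carrier_vec n"
    using ia unfolding irr_atomic_def irreducible_pmod_def by auto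
  have AB: "A \<in> carrier_mat n n" "B \<in> carrier_mat n n" using pmod_carrier[OF pm] by auto
  from per obtain k where k: "0 < k" "is_period p k" unfolding periodic_ray_def is_period_def by auto
  define d where "d = (LEAST d. 0 < d \<and> is_period p d)"
  have d0: "0 < d" and pd: "is_period p d" and pu: "prime_word (map p [0..<d])"
    using least_period_prime[OF k] unfolding d_def by auto
  define u where "u = map p [0..<d]"
  from W pu obtain w0 where w0: "w0 \<in> W" "cyc_equiv w0 u" unfolding representatives_def u_def by blast
  then obtain r where r: "rotate r w0 = u" unfolding cyc_equiv_def by auto
  have lw: "length w0 = d" using arg_cong[OF r, of length] unfolding u_def by simp
  have pw0: "prime_word w0" using W w0 unfolding representatives_def by auto
  define i where "i = d - r mod d"
  have qw: "\<forall>t. p (t + i) = w0 ! (t mod d)"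
  proof
    fix t
    have m: "(t + i) mod d < d" using d0 by simp
    have "p (t + i) = p ((t + i) mod d)" by (rule per_reduce[OF pd])
    also have "\<dots> = u ! ((t + i) mod d)" unfolding u_def using m by simp
    also have "\<dots> = w0 ! ((r + (t + i) mod d) mod d)" unfolding r[symmetric] using m lw by (simp add: nth_rotate)
    also have "(r + (t + i) mod d) mod d = (t + (r + i)) mod d" by (simp add: mod_add_right_eq add_ac)
    also have "r + i = d * Suc (r div d)"
    proof -
      have "r mod d < d" using d0 by simp
      hence "r + i = (r - r mod d) + d" unfolding i_def by simp
      also have "r - r mod d = d * (r div d)" by (simp add: minus_mod_eq_mult_div)
      finally show ?thesis by simp
    qed
    also have "(t + d * Suc (r div d)) mod d = t mod d" by (rule mod_mult_self2)
    finally show "p (t + i) = w0 ! (t mod d)" .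
  qed
  define \<xi>' where "\<xi>' = path_apply (A, B, n) p i \<xi>"
  have xi'c: "\<xi>' \<in> carrier_vec n" unfolding \<xi>'_def using path_carrier AB xi by blast
  from cont[unfolded contained_iff[OF xi]] have xi0: "\<xi> \<noteq> 0\<^sub>v n"
    and xin: "\<And>m. nsq (path_apply (A, B, n) p m \<xi>) = nsq \<xi>" by auto
  have nx: "nsq \<xi> \<noteq> 0" using nsq_zero_iff[OF xi] xi0 by simp
  have cont': "contained_in_ray (A, B, n) \<xi>' (\<lambda>t. p (t + i))"
    unfolding contained_iff[OF xi'c]
  proof (intro conjI allI)
    have e: "nsq \<xi>' = nsq \<xi>" unfolding \<xi>'_def by (rule xin)
    show "\<xi>' \<noteq> 0\<^sub>v n" using e nx nsq_zero_iff[OF xi'c] by auto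
    fix m
    have "path_apply (A, B, n) (\<lambda>t. p (t + i)) m \<xi>' = path_apply (A, B, n) p (i + m) \<xi>"
      unfolding \<xi>'_def by (rule path_shift[symmetric])
    thus "nsq (path_apply (A, B, n) (\<lambda>t. p (t + i)) m \<xi>') = nsq \<xi>'" using xin e by simp
  qed
  from surj_core[OF pm irr pw0 lw _ xi'c cont'] qw
  obtain \<phi> where phi: "cmod \<phi> = 1" "unit_equiv (m_wphi w0 \<phi>) (A, B, n)" by auto
  show ?thesis using w0(1) phi Me unfolding S1_def by auto
qed

lemma nsq_unitary: assumes U: "unitary_mat n U" and v: "v \<in> carrier_vec n"
  shows "nsq (U *\<^sub>v v) = nsq v"
proof -
  have Uc: "U \<in> carrier_mat n n" and u1: "adj U * U = 1\<^sub>m n" using U unfolding unitary_mat_def by auto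
  have aU: "adj U \<in> carrier_mat n n" using adj_carrier[OF Uc] .
  have "ip (U *\<^sub>v v) (U *\<^sub>v v) = ip v (adj U *\<^sub>v (U *\<^sub>v v))" using ip_adj[OF Uc v] Uc v by simp
  also have "adj U *\<^sub>v (U *\<^sub>v v) = (adj U * U) *\<^sub>v v" using aU Uc v by (simp add: assoc_mult_mat_vec[of _ n n _ n])
  also have "\<dots> = v" using u1 v by simp
  finally show ?thesis unfolding ip_self by simp
qed

lemma inj_core: assumes W: "representatives W" and w: "w \<in> W" and w': "w' \<in> W"
  and phi: "cmod \<phi> = 1" and phi': "cmod \<phi>' = 1"
  and ue: "unit_equiv (m_wphi w \<phi>) (m_wphi w' \<phi>')"
  shows "w = w' \<and> \<phi> = \<phi>'"
proof -
  define d where "d = length w"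
  have pw: "prime_word w" and pw': "prime_word w'" using W w w' unfolding representatives_def by auto
  from ue obtain U where dd: "d = length w'" and U: "unitary_mat d U"
    and e0: "U * Xm w \<phi> False = Xm w' \<phi>' False * U" and e1: "U * Xm w \<phi> True = Xm w' \<phi>' True * U"
    unfolding m_wphi_eq unit_equiv_def d_def by auto
  have d0: "0 < d" using pw unfolding prime_word_def d_def by auto
  interpret m1: model w \<phi> d using d0 phi unfolding d_def by unfold_locales auto
  interpret m2: model w' \<phi>' d using d0 phi' dd by unfold_locales auto
  have Uc: "U \<in> carrier_mat d d" using U unfolding unitary_mat_def by auto
  have ex: "U * Xm w \<phi> x = Xm w' \<phi>' x * U" for x using e0 e1 by (cases x) auto
  have intw: "U *\<^sub>v path_apply (m_wphi w \<phi>) q m v = path_apply (m_wphi w' \<phi>') q m (U *\<^sub>v v)"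
    if v: "v \<in> carrier_vec d" for q m v
  proof (induction m)
    case 0 show ?case by simp
  next
    case (Suc m)
    have y: "path_apply (m_wphi w \<phi>) q m v \<in> carrier_vec d" by (rule m1.path_MM_carrier[OF v])
    have "U *\<^sub>v path_apply (m_wphi w \<phi>) q (Suc m) v = U *\<^sub>v (Xm w \<phi> (q m) *\<^sub>v path_apply (m_wphi w \<phi>) q m v)"
      by (simp only: m1.path_MM_Suc)
    also have "\<dots> = (U * Xm w \<phi> (q m)) *\<^sub>v path_apply (m_wphi w \<phi>) q m v"
      using Uc m1.Xc y by (simp add: assoc_mult_mat_vec[of _ d d _ d])
    also have "\<dots> = (Xm w' \<phi>' (q m) * U) *\<^sub>v path_apply (m_wphi w \<phi>) q m v" by (simp only: ex)
    also have "\<dots> = Xm w' \<phi>' (q m) *\<^sub>v path_apply (m_wphi w' \<phi>') q m (U *\<^sub>v v)"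
      using Uc m2.Xc y Suc by (simp add: assoc_mult_mat_vec[of _ d d _ d])
    also have "\<dots> = path_apply (m_wphi w' \<phi>') q (Suc m) (U *\<^sub>v v)" by (simp only: m2.path_MM_Suc)
    finally show ?case .
  qed
  define q where "q t = w ! (t mod d)" for t
  define e where "e = (unit_vec d 0 :: complex vec)"
  have ec: "e \<in> carrier_vec d" unfolding e_def by simp
  have ene: "e \<noteq> 0\<^sub>v d"
  proof
    assume "e = 0\<^sub>v d"
    hence "e $ 0 = 0\<^sub>v d $ 0" by simp
    thus False using d0 unfolding e_def by simp
  qed
  have econt: "contained_in_ray (m_wphi w \<phi>) e q"
    unfolding m1.contained_MM[OF ec] using ene by (auto simp: e_def q_def unit_vec_def)
  define \<eta> where "\<eta> = U *\<^sub>v e"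
  have etac: "\<eta> \<in> carrier_vec d" unfolding \<eta>_def using Uc ec by simp
  have cv1: "contained_in_ray (m_wphi w \<phi>) e q \<longleftrightarrow> e \<noteq> 0\<^sub>v d \<and> (\<forall>m. nsq (path_apply (m_wphi w \<phi>) q m e) = nsq e)"
    unfolding m1.MM_eq by (rule contained_iff[OF ec])
  have cv2: "contained_in_ray (m_wphi w' \<phi>') \<eta> q \<longleftrightarrow> \<eta> \<noteq> 0\<^sub>v d \<and> (\<forall>m. nsq (path_apply (m_wphi w' \<phi>') q m \<eta>) = nsq \<eta>)"
    unfolding m2.MM_eq by (rule contained_iff[OF etac])
  have ne: "nsq \<eta> = nsq e" unfolding \<eta>_def by (rule nsq_unitary[OF U ec])
  have "nsq e \<noteq> 0" using nsq_zero_iff[OF ec] ene by simp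
  hence eta0: "\<eta> \<noteq> 0\<^sub>v d" using ne nsq_zero_iff[OF etac] by auto
  have etacont: "contained_in_ray (m_wphi w' \<phi>') \<eta> q"
    unfolding cv2
  proof (intro conjI allI eta0)
    fix m
    have "path_apply (m_wphi w' \<phi>') q m \<eta> = U *\<^sub>v path_apply (m_wphi w \<phi>) q m e"
      unfolding \<eta>_def using intw[OF ec] by simp
    hence "nsq (path_apply (m_wphi w' \<phi>') q m \<eta>) = nsq (path_apply (m_wphi w \<phi>) q m e)"
      using nsq_unitary[OF U m1.path_MM_carrier[OF ec]] by simp
    thus "nsq (path_apply (m_wphi w' \<phi>') q m \<eta>) = nsq \<eta>" using econt cv1 ne by simp
  qed
  have H: "\<forall>i<d. \<eta> $ i \<noteq> 0 \<longrightarrow> (\<forall>t. w' ! ((i + t) mod d) = q t)"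
    using etacont unfolding m2.contained_MM[OF etac] by blast
  obtain i where i: "i < d" "\<eta> $ i \<noteq> 0"
  proof (rule ccontr)
    assume "\<not> thesis"
    hence "\<forall>i<d. \<eta> $ i = 0" using that by blast
    hence "\<eta> = 0\<^sub>v d" using etac by (intro eq_vecI) auto
    thus False using eta0 by simp
  qed
  have "rotate i w' = w"
  proof (rule nth_equalityI)
    show "length (rotate i w') = length w" using dd d_def by simp
    fix t assume t: "t < length (rotate i w')"
    hence t': "t < d" using dd by simp
    have "rotate i w' ! t = w' ! ((i + t) mod d)" using t' dd by (simp add: nth_rotate)
    also have "\<dots> = q t" using H i by blast
    also have "\<dots> = w ! t" unfolding q_def using t' by simp
    finally show "rotate i w' ! t = w ! t" .
  qed
  hence c1: "cyc_equiv w' w" unfolding cyc_equiv_def by blast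
  have c2: "cyc_equiv w w" unfolding cyc_equiv_def by (rule exI[of _ 0]) simp
  have ww: "w' = w" using W pw w w' c1 c2 unfolding representatives_def by blast
  have i0: "j = 0" if "j < d" "\<eta> $ j \<noteq> 0" for j
  proof -
    have "\<forall>t<d. w ! ((j + t) mod d) = w ! ((0 + t) mod d)" using H that ww unfolding q_def by simp
    from prime_rot_unique[OF pw d_def[symmetric] that(1) d0 this] show ?thesis .
  qed
  have eta00: "\<eta> $ 0 \<noteq> 0" using i i0 by auto
  have facq: "m1.fac q 0 d = \<phi>"
  proof -
    have "m1.fac q 0 d = (\<Prod>t<d. gam w \<phi> t)" unfolding m1.fac_def q_def by (intro prod.cong refl) simp
    thus ?thesis using m1.prod_gam by simp
  qed
  have facq2: "m2.fac q 0 d = \<phi>'"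
  proof -
    have "m2.fac q 0 d = (\<Prod>t<d. gam w' \<phi>' t)" unfolding m2.fac_def q_def using ww by (intro prod.cong refl) simp
    thus ?thesis using m2.prod_gam by simp
  qed
  have p1: "path_apply (m_wphi w \<phi>) q d e = \<phi> \<cdot>\<^sub>v e"
  proof (rule eq_vecI)
    fix j assume "j < dim_vec (\<phi> \<cdot>\<^sub>v e)"
    hence j: "j < d" using ec by simp
    have "path_apply (m_wphi w \<phi>) q d e $ j = path_apply (m_wphi w \<phi>) q d e $ ((j + d) mod d)" using j by simp
    also have "\<dots> = e $ j * m1.fac q j d" by (rule m1.PC[OF ec j])
    also have "\<dots> = (\<phi> \<cdot>\<^sub>v e) $ j" using facq j ec by (cases "j = 0") (auto simp: e_def unit_vec_def)
    finally show "path_apply (m_wphi w \<phi>) q d e $ j = (\<phi> \<cdot>\<^sub>v e) $ j" .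
  qed (use m1.path_MM_carrier[OF ec] ec in simp)
  have "path_apply (m_wphi w' \<phi>') q d \<eta> = U *\<^sub>v (\<phi> \<cdot>\<^sub>v e)"
    unfolding \<eta>_def using intw[OF ec, of q d] p1 by simp
  also have "\<dots> = \<phi> \<cdot>\<^sub>v \<eta>" unfolding \<eta>_def using mult_mat_vec[OF Uc ec] .
  finally have p2: "path_apply (m_wphi w' \<phi>') q d \<eta> = \<phi> \<cdot>\<^sub>v \<eta>" .
  have "path_apply (m_wphi w' \<phi>') q d \<eta> $ ((0 + d) mod d) = \<eta> $ 0 * m2.fac q 0 d"
    by (rule m2.PC[OF etac d0])
  hence "\<phi> * \<eta> $ 0 = \<eta> $ 0 * \<phi>'" using p2 facq2 etac d0 by simp
  hence "\<phi> = \<phi>'" using eta00 by (simp add: mult.commute)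
  thus ?thesis using ww by simp
qed

theorem corollary2p19:
  assumes "representatives W"
  shows "bij_betw (\<lambda>(w, \<phi>). ue_rel `` {m_wphi w \<phi>}) (W \<times> S1)
           ({M. irr_atomic M} // ue_rel)"
proof -
  note W = assms
  have ia: "irr_atomic (m_wphi w \<phi>)" if "w \<in> W" "\<phi> \<in> S1" for w \<phi>
    using model_irr_atomic W that unfolding representatives_def S1_def by auto
  show ?thesis unfolding bij_betw_def
  proof (intro conjI)
    show "inj_on (\<lambda>(w, \<phi>). ue_rel `` {m_wphi w \<phi>}) (W \<times> S1)"
    proof (rule inj_onI, clarify)
      fix w \<phi> w' \<phi>' assume a: "w \<in> W" "\<phi> \<in> S1" "w' \<in> W" "\<phi>' \<in> S1"
        and eq: "ue_rel `` {m_wphi w \<phi>} = ue_rel `` {m_wphi w' \<phi>'}"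
      have "(m_wphi w \<phi>, m_wphi w' \<phi>') \<in> ue_rel"
        using eq_equiv_class_iff[OF ue_equiv, of "m_wphi w \<phi>" "m_wphi w' \<phi>'"] ia a eq by auto
      hence "unit_equiv (m_wphi w \<phi>) (m_wphi w' \<phi>')" unfolding ue_rel_def by auto
      from inj_core[OF W a(1) a(3) _ _ this] a show "w = w' \<and> \<phi> = \<phi>'" unfolding S1_def by auto
    qed
    show "(\<lambda>(w, \<phi>). ue_rel `` {m_wphi w \<phi>}) ` (W \<times> S1) = {M. irr_atomic M} // ue_rel"
    proof
      show "(\<lambda>(w, \<phi>). ue_rel `` {m_wphi w \<phi>}) ` (W \<times> S1) \<subseteq> {M. irr_atomic M} // ue_rel"
        using ia by (auto intro: quotientI)
      show "{M. irr_atomic M} // ue_rel \<subseteq> (\<lambda>(w, \<phi>). ue_rel `` {m_wphi w \<phi>}) ` (W \<times> S1)"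
      proof
        fix X assume "X \<in> {M. irr_atomic M} // ue_rel"
        then obtain M where X: "X = ue_rel `` {M}" and M: "irr_atomic M" by (auto elim: quotientE)
        from surj_all[OF W M] obtain w \<phi> where w: "w \<in> W" "\<phi> \<in> S1" and u: "unit_equiv (m_wphi w \<phi>) M"
          by blast
        have "(m_wphi w \<phi>, M) \<in> ue_rel" unfolding ue_rel_def using ia[OF w] M u by auto
        hence "ue_rel `` {m_wphi w \<phi>} = ue_rel `` {M}" by (rule equiv_class_eq[OF ue_equiv])
        thus "X \<in> (\<lambda>(w, \<phi>). ue_rel `` {m_wphi w \<phi>}) ` (W \<times> S1)" using X w by force
      qed
    qed
  qed
qed

end
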